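(* Let $\Delta_{a_ia_j}$ be the upright triangle that the edge $a_ia_j$ belongs to, and $b_2$ be the midpoint of $a_i$ and $a_j$. We have \begin{equation*} S_N^{\omega}(\alpha,\beta,\lambda)(a_i,a_j)= \begin{cases} \displaystyle 1-\lambda-\frac{A(\alpha,\beta,\lambda)}{64\mathcal{D}(\beta,\lambda)} & \text{if $a_i=a_j$}, \\ \displaystyle -\frac{\Psi(\alpha,\beta,\lambda)\omega_{a_ib_2}\omega_{b_2a_j}}{16\mathcal{D}(\beta,\lambda)} & \text{if $a_i\neq a_j$, $a_i\in V_N\setminus V_0$, and $\Delta_{a_ia_j}$ is traversed CCW}, \\ \displaystyle -\frac{\Psi(\alpha,\beta,\lambda)\omega_{a_ib_2}\omega_{b_2a_j}}{8\mathcal{D}(\beta,\lambda)} & \text{if $a_i\neq a_j$, $a_i\in V_0$, and $\Delta_{a_ia_j}$ is traversed CCW}, \\ \displaystyle -\frac{\overline{\Psi(\alpha,\beta,\lambda)}\omega_{a_ib_2}\omega_{b_2a_j}}{16\mathcal{D}(\beta,\lambda)} & \text{if $a_i\neq a_j$, $a_i\in V_N\setminus V_0$, and $\Delta_{a_ia_j}$ is traversed CW}, \\ \displaystyle -\frac{\overline{\Psi(\alpha,\beta,\lambda)}\omega_{a_ib_2}\omega_{b_2a_j}}{8\mathcal{D}(\beta,\lambda)} & \text{if $a_i\neq a_j$, $a_i\in V_0$, and $\Delta_{a_ia_j}$ is traversed CW}, \end{cases} \end{equation*} where \begin{align*} A(\alpha,\beta,\lambda)&=16\lambda^2-(32+4\cos(2\pi\alpha))\lambda+15+4\cos(2\pi\alpha)+\cos(2\pi(\alpha+\beta)),\\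 \mathcal{D}(\beta,\lambda)&=-\lambda^3+3\lambda^2-\tfrac{45}{16}\lambda+\tfrac{13}{16}-\tfrac{1}{32}\cos(2\pi\beta),\\ \Psi(\alpha,\beta,\lambda)&=(1-\lambda)^2-\tfrac{1}{16}+\tfrac{1-\lambda}{4}(2e^{-2\pi i\alpha}+e^{-2\pi i(2\alpha+\beta)})+\tfrac{1}{16}(e^{-4\pi i \alpha}+2e^{-2\pi i (\alpha+\beta)}). \end{align*}
   Context: Let $G_N=(V_N,E_N)$ be the level-$N$ Sierpinski gasket graph (unit edge length), $V_0$ its three corner vertices, and $V_{N-1}\subset V_N$ the vertices of the nested level-$(N-1)$ graph. Let $\omega$ be a $U(1)$ connection on $G_N$ (unit complex numbers $\omega_{xy}$ with $\omega_{yx}=\overline{\omega_{xy}}$) such that the magnetic flux (holonomy $e^{2\pi i\theta}$ around the counterclockwise cycle) through every upright unit triangle is $\alpha$ and through every downright unit triangle is $\beta$. The magnetic Laplacian $\mathcal{L}^\omega_N$ is the $|V_N|\times|V_N|$ matrix with entries $1$ if $x=y$; $-\tfrac12\omega_{xy}$ if $x\in V_0$, $y\sim x$; $-\tfrac14\omega_{xy}$ if $x\in V_N\setminus V_0$, $y\sim x$; and $0$ otherwise. Write $\mathcal{L}^\omega_N-\lambda I=\begin{bmatrix}A-\lambda I & B\\ C & D-\lambda I\end{bmatrix}$ with respect to the splitting $V_N=V_{N-1}\sqcup (V_N\setminus V_{N-1})$ (here the block $A$ is a matrix, distinct from the function $A(\alpha,\beta,\lambda)$). For $\lambda$ with $D-\lambda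 I$ invertible, the Schur complement is $S_N^{\omega}(\alpha,\beta,\lambda)=(A-\lambda I)-B(D-\lambda I)^{-1}C$, acting on $\ell^2(V_{N-1})$; its entries $(a_i,a_j)$ with $a_i,a_j\in V_{N-1}$ are nonzero only when $a_i=a_j$ or $a_i,a_j$ lie in a common level-$(N-1)$ cell. *)

theory Defs
  imports "HOL-Analysis.Analysis"
begin

text \<open>Vertices of the Sierpinski gasket graph are encoded in triangular-lattice
coordinates: the pair (i,j) stands for the point i*e1 + j*e2 with e1 = (1,0),
e2 = (1/2, sqrt 3/2).  The level-N gasket is the
triangle with corners (0,0), (2^N,0), (0,2^N).\<close>

type_synonym vtx = "int \<times> int"

definition padd :: "vtx \<Rightarrow> vtx \<Rightarrow> vtx" where
  "padd p q = (fst p + fst q, snd p + snd q)"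

definition pscale :: "int \<Rightarrow> vtx \<Rightarrow> vtx" where
  "pscale k p = (k * fst p, k * snd p)"

text \<open>Lower-left corners of the upright unit triangles of G_N.\<close>
fun sg_offs :: "nat \<Rightarrow> vtx set" where
  "sg_offs 0 = {(0,0)}"
| "sg_offs (Suc n) = sg_offs n \<union> padd (2^n, 0) ` sg_offs n \<union> padd (0, 2^n) ` sg_offs n"

text \<open>Corners of the upright triangle with lower-left corner c and side length s,
listed in counterclockwise order: c, c+(s,0), c+(0,s).\<close>
definition up_tri :: "vtx \<Rightarrow> int \<Rightarrow> vtx set" where
  "up_tri c s = {c, padd c (s,0), padd c (0,s)}"

definition ccw_in :: "vtx \<Rightarrow> int \<Rightarrow> vtx \<Rightarrow> vtx \<Rightarrow> bool" where
  "ccw_in c s x y \<longleftrightarrow>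
     (x, y) \<in> {(c, padd c (s,0)), (padd c (s,0), padd c (0,s)), (padd c (0,s), c)}"

definition sg_V :: "nat \<Rightarrow> vtx set" where
  "sg_V n = (\<Union>c\<in>sg_offs n. up_tri c 1)"

definition sg_adj :: "nat \<Rightarrow> vtx \<Rightarrow> vtx \<Rightarrow> bool" where
  "sg_adj n x y \<longleftrightarrow> x \<noteq> y \<and> (\<exists>c\<in>sg_offs n. x \<in> up_tri c 1 \<and> y \<in> up_tri c 1)"

definition sg_V0 :: "nat \<Rightarrow> vtx set" where
  "sg_V0 n = {(0,0), (2^n, 0), (0, 2^n)}"

definition sg_Vnest :: "nat \<Rightarrow> vtx set" where
  "sg_Vnest n = pscale 2 ` sg_V (n - 1)"

definition sg_cells_nest :: "nat \<Rightarrow> vtx set" where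
  "sg_cells_nest n = pscale 2 ` sg_offs (n - 1)"

definition midpt :: "vtx \<Rightarrow> vtx \<Rightarrow> vtx" where
  "midpt x y = ((fst x + fst y) div 2, (snd x + snd y) div 2)"

text \<open>U(1) connection on G_N with flux alpha through every upright unit triangle and
beta through every downright unit triangle (holonomy along the counterclockwise
cycle).  An upright unit triangle c, c+(1,0), c+(0,1) is traversed
counterclockwise in this order; a downright unit triangle has corners
c+(1,0) (bottom), c+(1,1), c+(0,1), traversed counterclockwise in this order.\<close>
definition flux_connection ::
  "nat \<Rightarrow> real \<Rightarrow> real \<Rightarrow> (vtx \<Rightarrow> vtx \<Rightarrow> complex) \<Rightarrow> bool" where
  "flux_connection n \<alpha> \<beta> \<omega> \<longleftrightarrow>
     (\<forall>x y. sg_adj n x y \<longrightarrow> norm (\<omega> x y) = 1 \<and> \<omega> y x = cnj (\<omega> x y)) \<and>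
     (\<forall>c\<in>sg_offs n.
        \<omega> c (padd c (1,0)) * \<omega> (padd c (1,0)) (padd c (0,1)) * \<omega> (padd c (0,1)) c
          = exp (2 * pi * \<i> * complex_of_real \<alpha>)) \<and>
     (\<forall>c. let p = padd c (1,0); r = padd c (1,1); q = padd c (0,1) in
        sg_adj n p r \<and> sg_adj n r q \<and> sg_adj n q p \<longrightarrow>
        \<omega> p r * \<omega> r q * \<omega> q p = exp (2 * pi * \<i> * complex_of_real \<beta>))"

definition mag_lap :: "nat \<Rightarrow> (vtx \<Rightarrow> vtx \<Rightarrow> complex) \<Rightarrow> vtx \<Rightarrow> vtx \<Rightarrow> complex" where
  "mag_lap n \<omega> x y =
     (if x = y then 1
      else if sg_adj n x y then (if x \<in> sg_V0 n then - (1/2) else - (1/4)) * \<omega> x y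
      else 0)"

definition inverse_on :: "'a set \<Rightarrow> ('a \<Rightarrow> 'a \<Rightarrow> complex) \<Rightarrow> ('a \<Rightarrow> 'a \<Rightarrow> complex) \<Rightarrow> bool" where
  "inverse_on W M Minv \<longleftrightarrow>
     (\<forall>x\<in>W. \<forall>y\<in>W. (\<Sum>z\<in>W. M x z * Minv z y) = (if x = y then 1 else 0)) \<and>
     (\<forall>x\<in>W. \<forall>y\<in>W. (\<Sum>z\<in>W. Minv x z * M z y) = (if x = y then 1 else 0))"

text \<open>The block D - lambda I of L - lambda I on V_N \ V_{N-1}.\<close>
definition shifted_block :: "nat \<Rightarrow> (vtx \<Rightarrow> vtx \<Rightarrow> complex) \<Rightarrow> real \<Rightarrow> vtx \<Rightarrow> vtx \<Rightarrow> complex" where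
  "shifted_block n \<omega> lam x y = mag_lap n \<omega> x y - (if x = y then complex_of_real lam else 0)"

definition schur :: "nat \<Rightarrow> (vtx \<Rightarrow> vtx \<Rightarrow> complex) \<Rightarrow> real \<Rightarrow> (vtx \<Rightarrow> vtx \<Rightarrow> complex)
    \<Rightarrow> vtx \<Rightarrow> vtx \<Rightarrow> complex" where
  "schur n \<omega> lam Dinv x y =
     shifted_block n \<omega> lam x y
     - (\<Sum>u\<in>sg_V n - sg_Vnest n. \<Sum>v\<in>sg_V n - sg_Vnest n.
          mag_lap n \<omega> x u * Dinv u v * mag_lap n \<omega> v y)"

definition A_fun :: "real \<Rightarrow> real \<Rightarrow> real \<Rightarrow> real" where
  "A_fun \<alpha> \<beta> lam = 16 * lam^2 - (32 + 4 * cos (2*pi*\<alpha>)) * lam + 15 + 4 * cos (2*pi*\<alpha>)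
      + cos (2*pi*(\<alpha> + \<beta>))"

definition D_fun :: "real \<Rightarrow> real \<Rightarrow> real" where
  "D_fun \<beta> lam = - (lam ^ 3) + 3 * lam ^ 2 - 45/16 * lam + 13/16 - 1/32 * cos (2*pi*\<beta>)"

definition Psi_fun :: "real \<Rightarrow> real \<Rightarrow> real \<Rightarrow> complex" where
  "Psi_fun \<alpha> \<beta> lam =
     (1 - lam)^2 - 1/16
     + (1 - lam)/4 * (2 * exp (- 2 * pi * \<i> * \<alpha>) + exp (- 2 * pi * \<i> * (2 * \<alpha> + \<beta>)))
     + 1/16 * (exp (- 4 * pi * \<i> * \<alpha>) + 2 * exp (- 2 * pi * \<i> * (\<alpha> + \<beta>)))"

end

theory Submission
  imports Defs
begin

lemma padd_simp[simp]: "padd (a,b) (c,d) = (a+c, b+d)" by (simp add: padd_def)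
lemma pscale_simp[simp]: "pscale k (a,b) = (k*a, k*b)" by (simp add: pscale_def)
declare sg_offs.simps(2)[simp del]



lemma offs_mem_Suc: "(x,y) \<in> sg_offs (Suc n) \<longleftrightarrow>
   (x,y) \<in> sg_offs n \<or> (x - 2^n, y) \<in> sg_offs n \<or> (x, y - 2^n) \<in> sg_offs n"
proof -
  have a: "(x,y) \<in> padd (2^n,0) ` sg_offs n \<longleftrightarrow> (x - 2^n, y) \<in> sg_offs n"
  proof
    assume "(x,y) \<in> padd (2^n,0) ` sg_offs n"
    then obtain p where "p \<in> sg_offs n" "(x,y) = padd (2^n,0) p" by blast
    then show "(x - 2^n, y) \<in> sg_offs n" by (cases p) simp
  next
    assume "(x - 2^n, y) \<in> sg_offs n"
    then show "(x,y) \<in> padd (2^n,0) ` sg_offs n" by (intro image_eqI[where x="(x-2^n,y)"]) auto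
  qed
  have b: "(x,y) \<in> padd (0,2^n) ` sg_offs n \<longleftrightarrow> (x, y - 2^n) \<in> sg_offs n"
  proof
    assume "(x,y) \<in> padd (0,2^n) ` sg_offs n"
    then obtain p where "p \<in> sg_offs n" "(x,y) = padd (0,2^n) p" by blast
    then show "(x, y - 2^n) \<in> sg_offs n" by (cases p) simp
  next
    assume "(x, y - 2^n) \<in> sg_offs n"
    then show "(x,y) \<in> padd (0,2^n) ` sg_offs n" by (intro image_eqI[where x="(x,y-2^n)"]) auto
  qed
  show ?thesis using a b by (simp add: sg_offs.simps(2))
qed

lemma offs_bounds: "(i,j) \<in> sg_offs n \<Longrightarrow> 0 \<le> i \<and> 0 \<le> j \<and> i + j < 2^n"
proof (induction n arbitrary: i j)
  case 0 then show ?case by simp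
next
  case (Suc n)
  from Suc.prems[unfolded offs_mem_Suc] show ?case
  proof (elim disjE)
    assume "(i,j) \<in> sg_offs n" then show ?thesis using Suc.IH[of i j] by simp
  next
    assume "(i - 2^n,j) \<in> sg_offs n" then show ?thesis using Suc.IH[of "i-2^n" j] by simp
  next
    assume "(i,j - 2^n) \<in> sg_offs n" then show ?thesis using Suc.IH[of i "j-2^n"] by simp
  qed
qed

lemma offs_Suc: "(x,y) \<in> sg_offs (Suc n) \<longleftrightarrow>
   (\<exists>i j. (i,j) \<in> sg_offs n \<and> ((x,y) = (2*i,2*j) \<or> (x,y) = (2*i+1,2*j) \<or> (x,y) = (2*i,2*j+1)))"
proof (induction n arbitrary: x y)
  case 0 then show ?case by (auto simp: sg_offs.simps(2))
next
  case (Suc n)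
  show ?case
  proof
    assume "(x,y) \<in> sg_offs (Suc (Suc n))"
    then consider "(x,y) \<in> sg_offs (Suc n)" | "(x - 2^Suc n, y) \<in> sg_offs (Suc n)"
       | "(x, y - 2^Suc n) \<in> sg_offs (Suc n)" unfolding offs_mem_Suc[of x y "Suc n"] by blast
    then show "\<exists>i j. (i,j) \<in> sg_offs (Suc n) \<and> ((x,y) = (2*i,2*j) \<or> (x,y) = (2*i+1,2*j) \<or> (x,y) = (2*i,2*j+1))"
    proof cases
      case 1
      then obtain i j where "(i,j) \<in> sg_offs n" "((x,y) = (2*i,2*j) \<or> (x,y) = (2*i+1,2*j) \<or> (x,y) = (2*i,2*j+1))"
        using Suc.IH by blast
      then show ?thesis apply - apply (rule exI[of _ i], rule exI[of _ j]) by (simp add: offs_mem_Suc)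
    next
      case 2
      then obtain i j where "(i,j) \<in> sg_offs n" "((x - 2^Suc n,y) = (2*i,2*j) \<or> (x- 2^Suc n,y) = (2*i+1,2*j) \<or> (x- 2^Suc n,y) = (2*i,2*j+1))"
        using Suc.IH by blast
      then show ?thesis apply - apply (rule exI[of _ "i + 2^n"], rule exI[of _ j]) by (auto simp add: offs_mem_Suc)
    next
      case 3
      then obtain i j where "(i,j) \<in> sg_offs n" "((x,y - 2^Suc n) = (2*i,2*j) \<or> (x,y- 2^Suc n) = (2*i+1,2*j) \<or> (x,y- 2^Suc n) = (2*i,2*j+1))"
        using Suc.IH by blast
      then show ?thesis apply - apply (rule exI[of _ i], rule exI[of _ "j + 2^n"]) by (auto simp add: offs_mem_Suc)
    qed
  next
    assume "\<exists>i j. (i,j) \<in> sg_offs (Suc n) \<and> ((x,y) = (2*i,2*j) \<or> (x,y) = (2*i+1,2*j) \<or> (x,y) = (2*i,2*j+1))"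
    then obtain i j where ij: "(i,j) \<in> sg_offs (Suc n)" "((x,y) = (2*i,2*j) \<or> (x,y) = (2*i+1,2*j) \<or> (x,y) = (2*i,2*j+1))"
      by blast
    from ij(1) consider "(i,j) \<in> sg_offs n" | "(i - 2^n, j) \<in> sg_offs n" | "(i, j - 2^n) \<in> sg_offs n"
      unfolding offs_mem_Suc by blast
    then show "(x,y) \<in> sg_offs (Suc (Suc n))"
    proof cases
      case 1
      then have "(x,y) \<in> sg_offs (Suc n)" using Suc.IH ij(2) by blast
      then show ?thesis by (simp add: offs_mem_Suc[of x y "Suc n"])
    next
      case 2
      then have "(x - 2^Suc n,y) \<in> sg_offs (Suc n)" using ij(2) apply - apply (rule iffD2[OF Suc.IH], rule exI[of _ "i - 2^n"], rule exI[of _ j]) by auto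
      then show ?thesis by (simp add: offs_mem_Suc[of x y "Suc n"])
    next
      case 3
      then have "(x,y - 2^Suc n) \<in> sg_offs (Suc n)"
        using ij(2) apply - apply (rule iffD2[OF Suc.IH], rule exI[of _ i], rule exI[of _ "j - 2^n"]) by auto
      then show ?thesis by (simp add: offs_mem_Suc[of x y "Suc n"])
    qed
  qed
qed

definition mids :: "nat \<Rightarrow> vtx" where
  "mids k = (if k = 0 then (1,0) else if k = 1 then (1,1) else (0,1))"
definition cor :: "nat \<Rightarrow> vtx" where
  "cor i = (if i = 0 then (0,0) else if i = 1 then (2,0) else (0,2))"
definition Fm :: "vtx \<Rightarrow> nat \<Rightarrow> vtx" where "Fm c k = padd (pscale 2 c) (mids k)"
definition Fc :: "vtx \<Rightarrow> nat \<Rightarrow> vtx" where "Fc c i = padd (pscale 2 c) (cor i)"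
definition ladj :: "nat \<Rightarrow> nat \<Rightarrow> bool" where
  "ladj i k \<longleftrightarrow> (i = 0 \<and> (k = 0 \<or> k = 2)) \<or> (i = 1 \<and> (k = 0 \<or> k = 1)) \<or> (i = 2 \<and> (k = 1 \<or> k = 2))"

lemma k3: "(k::nat) < 3 \<Longrightarrow> k = 0 \<or> k = 1 \<or> k = 2" by auto

lemma Fm_simp: "Fm (a,b) k = (if k = 0 then (2*a+1,2*b) else if k = 1 then (2*a+1,2*b+1) else (2*a,2*b+1))"
  by (simp add: Fm_def mids_def)
lemma Fc_simp: "Fc (a,b) i = (if i = 0 then (2*a,2*b) else if i = 1 then (2*a+2,2*b) else (2*a,2*b+2))"
  by (simp add: Fc_def cor_def)

lemma adj_sym: "sg_adj n x y = sg_adj n y x"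
  unfolding sg_adj_def by blast

definition T0 :: "int \<Rightarrow> int \<Rightarrow> vtx set" where "T0 i j = {(2*i,2*j),(2*i+1,2*j),(2*i,2*j+1)}"
definition T1 :: "int \<Rightarrow> int \<Rightarrow> vtx set" where "T1 i j = {(2*i+1,2*j),(2*i+2,2*j),(2*i+1,2*j+1)}"
definition T2 :: "int \<Rightarrow> int \<Rightarrow> vtx set" where "T2 i j = {(2*i,2*j+1),(2*i+1,2*j+1),(2*i,2*j+2)}"

lemma adj_Suc_D:
  assumes "sg_adj (Suc n) x y"
  shows "x \<noteq> y \<and> (\<exists>i j. (i,j) \<in> sg_offs n \<and>
     ((x \<in> T0 i j \<and> y \<in> T0 i j) \<or> (x \<in> T1 i j \<and> y \<in> T1 i j) \<or> (x \<in> T2 i j \<and> y \<in> T2 i j)))"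
proof -
  from assms obtain p q where pq: "(p,q) \<in> sg_offs (Suc n)" "x \<in> up_tri (p,q) 1" "y \<in> up_tri (p,q) 1" "x \<noteq> y"
    unfolding sg_adj_def by auto
  from pq(1) obtain i j where ij: "(i,j) \<in> sg_offs n" "(p,q) = (2*i,2*j) \<or> (p,q) = (2*i+1,2*j) \<or> (p,q) = (2*i,2*j+1)"
    unfolding offs_Suc by auto
  have "(x \<in> T0 i j \<and> y \<in> T0 i j) \<or> (x \<in> T1 i j \<and> y \<in> T1 i j) \<or> (x \<in> T2 i j \<and> y \<in> T2 i j)"
    using ij(2)
  proof (elim disjE)
    assume "(p,q) = (2*i,2*j)" then have "up_tri (p,q) 1 = T0 i j" by (simp add: up_tri_def T0_def)
    then show ?thesis using pq by simp
  next
    assume "(p,q) = (2*i+1,2*j)" then have "up_tri (p,q) 1 = T1 i j" unfolding up_tri_def T1_def by (simp add: algebra_simps)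
    then show ?thesis using pq by simp
  next
    assume "(p,q) = (2*i,2*j+1)" then have "up_tri (p,q) 1 = T2 i j" unfolding up_tri_def T2_def by (simp add: algebra_simps)
    then show ?thesis using pq by simp
  qed
  then show ?thesis using ij(1) pq(4) by blast
qed

lemma adj_I0: assumes "(a,b) \<in> sg_offs n" "x \<in> T0 a b" "y \<in> T0 a b" "x \<noteq> y" shows "sg_adj (Suc n) x y"
proof -
  have "(2*a,2*b) \<in> sg_offs (Suc n)" unfolding offs_Suc using assms(1) by blast
  moreover have "up_tri (2*a,2*b) 1 = T0 a b" by (simp add: up_tri_def T0_def)
  ultimately show ?thesis unfolding sg_adj_def using assms(2-4) by metis
qed
lemma adj_I1: assumes "(a,b) \<in> sg_offs n" "x \<in> T1 a b" "y \<in> T1 a b" "x \<noteq> y" shows "sg_adj (Suc n) x y"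
proof -
  have "(2*a+1,2*b) \<in> sg_offs (Suc n)" unfolding offs_Suc using assms(1) by blast
  moreover have "up_tri (2*a+1,2*b) 1 = T1 a b" unfolding up_tri_def T1_def by (simp add: algebra_simps)
  ultimately show ?thesis unfolding sg_adj_def using assms(2-4) by metis
qed
lemma adj_I2: assumes "(a,b) \<in> sg_offs n" "x \<in> T2 a b" "y \<in> T2 a b" "x \<noteq> y" shows "sg_adj (Suc n) x y"
proof -
  have "(2*a,2*b+1) \<in> sg_offs (Suc n)" unfolding offs_Suc using assms(1) by blast
  moreover have "up_tri (2*a,2*b+1) 1 = T2 a b" unfolding up_tri_def T2_def by (simp add: algebra_simps)
  ultimately show ?thesis unfolding sg_adj_def using assms(2-4) by metis
qed

lemma odd_ne[simp]:
  "2*(a::int) + 1 = 2*b \<longleftrightarrow> False" "2*(a::int) = 2*b + 1 \<longleftrightarrow> False"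
  "2*(a::int) + 1 = 2*b + 2 \<longleftrightarrow> False" "2*(a::int) + 2 = 2*b + 1 \<longleftrightarrow> False"
  by presburger+

lemma mid0_cell: "(2*a+1,2*b) \<in> T0 i j \<union> T1 i j \<union> T2 i j \<Longrightarrow> a = i \<and> b = j"
  unfolding T0_def T1_def T2_def by (elim UnE insertE emptyE; simp)
lemma mid1_cell: "(2*a+1,2*b+1) \<in> T0 i j \<union> T1 i j \<union> T2 i j \<Longrightarrow> a = i \<and> b = j"
  unfolding T0_def T1_def T2_def by (elim UnE insertE emptyE; simp)
lemma mid2_cell: "(2*a,2*b+1) \<in> T0 i j \<union> T1 i j \<union> T2 i j \<Longrightarrow> a = i \<and> b = j"
  unfolding T0_def T1_def T2_def by (elim UnE insertE emptyE; simp)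

lemma Fm_cell: assumes "Fm (a,b) k \<in> T0 i j \<union> T1 i j \<union> T2 i j" "k < 3" shows "a = i \<and> b = j"
  using k3[OF assms(2)]
proof (elim disjE)
  assume "k = 0" then show ?thesis using assms(1) by (intro mid0_cell) (simp add: Fm_simp)
next
  assume "k = 1" then show ?thesis using assms(1) by (intro mid1_cell) (simp add: Fm_simp)
next
  assume "k = 2" then show ?thesis using assms(1) by (intro mid2_cell) (simp add: Fm_simp)
qed

lemma adj_cell: assumes "sg_adj (Suc n) x y"
  shows "x \<noteq> y \<and> (\<exists>i j. (i,j) \<in> sg_offs n \<and> x \<in> T0 i j \<union> T1 i j \<union> T2 i j \<and> y \<in> T0 i j \<union> T1 i j \<union> T2 i j)"
  using adj_Suc_D[OF assms] by blast

lemma adj_mm: assumes "sg_adj (Suc n) (Fm c k) (Fm c' k')" "k < 3" "k' < 3" shows "c = c'"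
proof -
  obtain a b a' b' where c: "c = (a,b)" "c' = (a',b')" by (cases c, cases c')
  from adj_cell[OF assms(1)] obtain i j where
    "Fm c k \<in> T0 i j \<union> T1 i j \<union> T2 i j" "Fm c' k' \<in> T0 i j \<union> T1 i j \<union> T2 i j" by blast
  then show ?thesis using Fm_cell[of a b k i j] Fm_cell[of a' b' k' i j] assms(2,3) unfolding c by simp
qed

lemma adj_mm_I: assumes "c \<in> sg_offs n" "k < 3" "k' < 3" "k \<noteq> k'" shows "sg_adj (Suc n) (Fm c k) (Fm c k')"
proof -
  obtain a b where c: "c = (a,b)" by (cases c)
  have ab: "(a,b) \<in> sg_offs n" using assms(1) c by simp
  have 01: "sg_adj (Suc n) (2*a+1,2*b) (2*a+1,2*b+1)" by (rule adj_I1[OF ab]) (auto simp: T1_def)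
  have 02: "sg_adj (Suc n) (2*a+1,2*b) (2*a,2*b+1)" by (rule adj_I0[OF ab]) (auto simp: T0_def)
  have 12: "sg_adj (Suc n) (2*a+1,2*b+1) (2*a,2*b+1)" by (rule adj_I2[OF ab]) (auto simp: T2_def)
  show ?thesis using k3[OF assms(2)] k3[OF assms(3)] assms(4) 01 02 12 adj_sym
    unfolding c Fm_simp by (elim disjE; simp)
qed

lemma ev_mid0: "((2*a,2*b) \<in> T0 i j \<and> (2*i+1,2*j) \<in> T0 i j) \<or> ((2*a,2*b) \<in> T1 i j \<and> (2*i+1,2*j) \<in> T1 i j) \<or>
   ((2*a,2*b) \<in> T2 i j \<and> (2*i+1,2*j) \<in> T2 i j) \<Longrightarrow> (a = i \<and> b = j) \<or> (a = i+1 \<and> b = j)"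
  unfolding T0_def T1_def T2_def by (elim disjE conjE insertE emptyE; simp)
lemma ev_mid1: "((2*a,2*b) \<in> T0 i j \<and> (2*i+1,2*j+1) \<in> T0 i j) \<or> ((2*a,2*b) \<in> T1 i j \<and> (2*i+1,2*j+1) \<in> T1 i j) \<or>
   ((2*a,2*b) \<in> T2 i j \<and> (2*i+1,2*j+1) \<in> T2 i j) \<Longrightarrow> (a = i+1 \<and> b = j) \<or> (a = i \<and> b = j+1)"
  unfolding T0_def T1_def T2_def by (elim disjE conjE insertE emptyE; simp)
lemma ev_mid2: "((2*a,2*b) \<in> T0 i j \<and> (2*i,2*j+1) \<in> T0 i j) \<or> ((2*a,2*b) \<in> T1 i j \<and> (2*i,2*j+1) \<in> T1 i j) \<or>
   ((2*a,2*b) \<in> T2 i j \<and> (2*i,2*j+1) \<in> T2 i j) \<Longrightarrow> (a = i \<and> b = j) \<or> (a = i \<and> b = j+1)"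
  unfolding T0_def T1_def T2_def by (elim disjE conjE insertE emptyE; simp)

lemma adj_cm: assumes "sg_adj (Suc n) (2*a,2*b) (Fm c k)" "k < 3"
  shows "\<exists>i<3. (2*a,2*b) = Fc c i \<and> ladj i k"
proof -
  obtain a' b' where c: "c = (a',b')" by (cases c)
  from adj_Suc_D[OF assms(1)] obtain i j where ij:
    "((2*a,2*b) \<in> T0 i j \<and> Fm c k \<in> T0 i j) \<or> ((2*a,2*b) \<in> T1 i j \<and> Fm c k \<in> T1 i j) \<or>
     ((2*a,2*b) \<in> T2 i j \<and> Fm c k \<in> T2 i j)"
    by blast
  then have "Fm c k \<in> T0 i j \<union> T1 i j \<union> T2 i j" by blast
  with Fm_cell[of a' b' k i j] assms(2) have e: "a' = i" "b' = j" unfolding c by auto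
  show ?thesis using k3[OF assms(2)]
  proof (elim disjE)
    assume k: "k = 0"
    have "(a = i \<and> b = j) \<or> (a = i+1 \<and> b = j)" using ij unfolding k c e Fm_simp by (intro ev_mid0) simp
    then show ?thesis
    proof
      assume "a = i \<and> b = j" then show ?thesis by (intro exI[of _ 0]) (simp add: c e Fc_simp ladj_def k)
    next
      assume "a = i+1 \<and> b = j" then show ?thesis by (intro exI[of _ 1]) (simp add: c e Fc_simp ladj_def k)
    qed
  next
    assume k: "k = 1"
    have "(a = i+1 \<and> b = j) \<or> (a = i \<and> b = j+1)" using ij unfolding k c e Fm_simp by (intro ev_mid1) simp
    then show ?thesis
    proof
      assume "a = i+1 \<and> b = j" then show ?thesis by (intro exI[of _ 1]) (simp add: c e Fc_simp ladj_def k)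
    next
      assume "a = i \<and> b = j+1" then show ?thesis by (intro exI[of _ 2]) (simp add: c e Fc_simp ladj_def k)
    qed
  next
    assume k: "k = 2"
    have "(a = i \<and> b = j) \<or> (a = i \<and> b = j+1)" using ij unfolding k c e Fm_simp by (intro ev_mid2) simp
    then show ?thesis
    proof
      assume "a = i \<and> b = j" then show ?thesis by (intro exI[of _ 0]) (simp add: c e Fc_simp ladj_def k)
    next
      assume "a = i \<and> b = j+1" then show ?thesis by (intro exI[of _ 2]) (simp add: c e Fc_simp ladj_def k)
    qed
  qed
qed

lemma up_tri_T: "up_tri (2*a,2*b) 1 = T0 a b" "up_tri (2*a+1,2*b) 1 = T1 a b" "up_tri (2*a,2*b+1) 1 = T2 a b"
  unfolding up_tri_def T0_def T1_def T2_def by (simp_all add: algebra_simps)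

lemma V_Suc: "x \<in> sg_V (Suc n) \<longleftrightarrow> (\<exists>a b. (a,b) \<in> sg_offs n \<and> x \<in> T0 a b \<union> T1 a b \<union> T2 a b)"
proof
  assume "x \<in> sg_V (Suc n)"
  then obtain p q where pq: "(p,q) \<in> sg_offs (Suc n)" "x \<in> up_tri (p,q) 1" unfolding sg_V_def by auto
  from pq(1) obtain i j where ij: "(i,j) \<in> sg_offs n" "(p,q) = (2*i,2*j) \<or> (p,q) = (2*i+1,2*j) \<or> (p,q) = (2*i,2*j+1)"
    unfolding offs_Suc by auto
  from ij(2) have "x \<in> T0 i j \<union> T1 i j \<union> T2 i j" using pq(2) up_tri_T by auto
  then show "\<exists>a b. (a,b) \<in> sg_offs n \<and> x \<in> T0 a b \<union> T1 a b \<union> T2 a b" using ij(1) by blast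
next
  assume "\<exists>a b. (a,b) \<in> sg_offs n \<and> x \<in> T0 a b \<union> T1 a b \<union> T2 a b"
  then obtain a b where ab: "(a,b) \<in> sg_offs n" "x \<in> T0 a b \<union> T1 a b \<union> T2 a b" by blast
  have s: "(2*a,2*b) \<in> sg_offs (Suc n)" "(2*a+1,2*b) \<in> sg_offs (Suc n)" "(2*a,2*b+1) \<in> sg_offs (Suc n)"
    unfolding offs_Suc using ab(1) by blast+
  from ab(2) show "x \<in> sg_V (Suc n)"
    unfolding sg_V_def using s up_tri_T by (metis UN_iff UnE)
qed

lemma Vnest_Suc: "x \<in> sg_Vnest (Suc n) \<longleftrightarrow> (\<exists>p q. (p,q) \<in> sg_V n \<and> x = (2*p,2*q))"
proof
  assume "x \<in> sg_Vnest (Suc n)"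
  then obtain z where "z \<in> sg_V n" "x = pscale 2 z" unfolding sg_Vnest_def by auto
  then show "\<exists>p q. (p,q) \<in> sg_V n \<and> x = (2*p,2*q)" by (cases z) auto
next
  assume "\<exists>p q. (p,q) \<in> sg_V n \<and> x = (2*p,2*q)"
  then obtain p q where pq: "(p,q) \<in> sg_V n" "x = (2*p,2*q)" by auto
  have "pscale 2 (p,q) \<in> pscale 2 ` sg_V n" using pq(1) by (rule imageI)
  then show "x \<in> sg_Vnest (Suc n)" unfolding sg_Vnest_def using pq(2) by simp
qed

lemma Fm_in_V: "c \<in> sg_offs n \<Longrightarrow> k < 3 \<Longrightarrow> Fm c k \<in> sg_V (Suc n)"
  unfolding V_Suc by (cases c) (auto dest!: k3 simp: Fm_simp T0_def T1_def T2_def)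

lemma Fm_notin_nest: "Fm c k \<notin> sg_Vnest (Suc n)"
  unfolding Vnest_Suc by (cases c) (auto simp: Fm_simp)

lemma odd_ne0[simp]: "2*(a::int) + 1 = 0 \<longleftrightarrow> False" by presburger

lemma Fm_notin_V0: "Fm c k \<notin> sg_V0 (Suc n)"
  unfolding sg_V0_def by (cases c) (auto simp: Fm_simp)

lemma Fm_inj: "Fm c k = Fm c' k' \<Longrightarrow> k < 3 \<Longrightarrow> k' < 3 \<Longrightarrow> c = c' \<and> k = k'"
  by (cases c, cases c') (auto dest!: k3 simp: Fm_simp)

lemma W_eq: "sg_V (Suc n) - sg_Vnest (Suc n) = (\<lambda>(c,k). Fm c k) ` (sg_offs n \<times> {..<3})"
proof
  show "(\<lambda>(c,k). Fm c k) ` (sg_offs n \<times> {..<3}) \<subseteq> sg_V (Suc n) - sg_Vnest (Suc n)"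
    using Fm_in_V Fm_notin_nest by auto
next
  show "sg_V (Suc n) - sg_Vnest (Suc n) \<subseteq> (\<lambda>(c,k). Fm c k) ` (sg_offs n \<times> {..<3})"
  proof
    fix x assume x: "x \<in> sg_V (Suc n) - sg_Vnest (Suc n)"
    have "x \<in> sg_V (Suc n)" using x by blast
    then obtain a b where ab: "(a,b) \<in> sg_offs n" "x \<in> T0 a b \<union> T1 a b \<union> T2 a b" unfolding V_Suc by blast
    have sub: "up_tri (a,b) 1 \<subseteq> sg_V n" using ab(1) unfolding sg_V_def by blast
    have ev: "(a,b) \<in> sg_V n" "(a+1,b) \<in> sg_V n" "(a,b+1) \<in> sg_V n"
      using sub unfolding up_tri_def by auto
    have "x \<noteq> (2*a,2*b)" "x \<noteq> (2*(a+1),2*b)" "x \<noteq> (2*a,2*(b+1))"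
      using x[unfolded Diff_iff Vnest_Suc] by (metis ev)+
    then have "x = Fm (a,b) 0 \<or> x = Fm (a,b) 1 \<or> x = Fm (a,b) 2"
      using ab(2) unfolding T0_def T1_def T2_def Fm_simp by (auto simp: algebra_simps)
    then show "x \<in> (\<lambda>(c,k). Fm c k) ` (sg_offs n \<times> {..<3})"
      using ab(1) by (auto intro: image_eqI[where x="((a,b),0)"] image_eqI[where x="((a,b),1)"] image_eqI[where x="((a,b),2)"])
  qed
qed

lemma Fm_inj_on: "inj_on (\<lambda>(c,k). Fm c k) (sg_offs n \<times> {..<3})"
  unfolding inj_on_def using Fm_inj by auto

lemma V0_Suc_ev: "(2*a,2*b) \<in> sg_V0 (Suc n) \<longleftrightarrow> (a,b) \<in> sg_V0 n"
  unfolding sg_V0_def by auto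

lemma ev_ne_adj: "\<not> sg_adj (Suc n) (2*a,2*b) (2*a',2*b')"
proof
  assume "sg_adj (Suc n) (2*a,2*b) (2*a',2*b')"
  from adj_Suc_D[OF this] obtain i j where
    "((2*a,2*b) \<in> T0 i j \<and> (2*a',2*b') \<in> T0 i j) \<or> ((2*a,2*b) \<in> T1 i j \<and> (2*a',2*b') \<in> T1 i j) \<or>
     ((2*a,2*b) \<in> T2 i j \<and> (2*a',2*b') \<in> T2 i j)" "(2*a,2*b) \<noteq> (2*a',2*b')"
    by blast
  then show False unfolding T0_def T1_def T2_def by (elim disjE conjE insertE emptyE; simp)
qed

lemma offs_finite: "finite (sg_offs n)"
  by (induction n) (auto simp: sg_offs.simps(2))

lemma zero_offs: "(0,0) \<in> sg_offs n"
  by (induction n) (auto simp: offs_mem_Suc)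

lemma corner_offs: "(2^n - 1, 0) \<in> sg_offs n \<and> (0, 2^n - 1) \<in> sg_offs n"
proof (induction n)
  case 0 then show ?case by simp
next
  case (Suc n)
  then show ?case unfolding offs_mem_Suc by simp
qed

lemma V_bounds: "(x,y) \<in> sg_V n \<Longrightarrow> 0 \<le> x \<and> 0 \<le> y \<and> x + y \<le> 2^n"
proof -
  assume "(x,y) \<in> sg_V n"
  then obtain i j where "(i,j) \<in> sg_offs n" "(x,y) \<in> up_tri (i,j) 1" unfolding sg_V_def by auto
  with offs_bounds[of i j n] show ?thesis unfolding up_tri_def by auto
qed

lemma V0_sub: "sg_V0 n \<subseteq> sg_V n"
proof -
  have "up_tri (0,0) 1 \<subseteq> sg_V n" "up_tri (2^n - 1, 0) 1 \<subseteq> sg_V n" "up_tri (0, 2^n - 1) 1 \<subseteq> sg_V n"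
    using zero_offs corner_offs unfolding sg_V_def by blast+
  then show ?thesis unfolding sg_V0_def up_tri_def by auto
qed

definition cnt :: "nat \<Rightarrow> vtx \<Rightarrow> nat" where "cnt n z = card {c \<in> sg_offs n. z \<in> up_tri c 1}"

lemma cnt_zero: "z \<notin> sg_V n \<Longrightarrow> cnt n z = 0"
proof -
  assume "z \<notin> sg_V n"
  then have "{c \<in> sg_offs n. z \<in> up_tri c 1} = {}" unfolding sg_V_def by blast
  then show ?thesis unfolding cnt_def by (metis card.empty)
qed

lemma padd_img: "(p,q) \<in> padd (u,w) ` X \<longleftrightarrow> (p - u, q - w) \<in> X"
proof
  assume "(p,q) \<in> padd (u,w) ` X"
  then obtain r where "r \<in> X" "(p,q) = padd (u,w) r" by blast
  then show "(p - u, q - w) \<in> X" by (cases r) simp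
next
  assume "(p - u, q - w) \<in> X"
  then show "(p,q) \<in> padd (u,w) ` X" by (intro image_eqI[where x="(p-u,q-w)"]) auto
qed

lemma up_tri_shift: "(x,y) \<in> up_tri (padd (u,v) c) 1 \<longleftrightarrow> (x - u, y - v) \<in> up_tri c 1"
  by (cases c) (auto simp: up_tri_def)

lemma cnt_Suc: "cnt (Suc n) (x,y) = cnt n (x,y) + cnt n (x - 2^n, y) + cnt n (x, y - 2^n)"
proof -
  let ?K = "(2::int)^n"
  let ?A = "{c \<in> sg_offs n. (x,y) \<in> up_tri c 1}"
  let ?B = "{c \<in> sg_offs n. (x - ?K, y) \<in> up_tri c 1}"
  let ?C = "{c \<in> sg_offs n. (x, y - ?K) \<in> up_tri c 1}"
  have eq: "{c \<in> sg_offs (Suc n). (x,y) \<in> up_tri c 1} = ?A \<union> padd (?K,0) ` ?B \<union> padd (0,?K) ` ?C"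
  proof (rule set_eqI)
    fix c :: vtx
    obtain p q where c: "c = (p,q)" by (cases c)
    have t1: "(x - ?K, y) \<in> up_tri (p - ?K, q) 1 \<longleftrightarrow> (x,y) \<in> up_tri (p,q) 1" unfolding up_tri_def by auto
    have t2: "(x, y - ?K) \<in> up_tri (p, q - ?K) 1 \<longleftrightarrow> (x,y) \<in> up_tri (p,q) 1" unfolding up_tri_def by auto
    show "c \<in> {c \<in> sg_offs (Suc n). (x,y) \<in> up_tri c 1} \<longleftrightarrow> c \<in> ?A \<union> padd (?K,0) ` ?B \<union> padd (0,?K) ` ?C"
      unfolding c Un_iff padd_img mem_Collect_eq offs_mem_Suc using t1 t2 by auto
  qed
  have fin: "finite ?A" "finite ?B" "finite ?C" using offs_finite by auto
  have d1: "?A \<inter> padd (?K,0) ` ?B = {}"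
  proof (rule equals0I)
    fix c assume "c \<in> ?A \<inter> padd (?K,0) ` ?B"
    moreover obtain p q where "c = (p,q)" by (cases c)
    ultimately have "(p,q) \<in> sg_offs n" "(p - ?K, q) \<in> sg_offs n" unfolding padd_img by auto
    then show False using offs_bounds[of p q n] offs_bounds[of "p - ?K" q n] by auto
  qed
  have d2: "(?A \<union> padd (?K,0) ` ?B) \<inter> padd (0,?K) ` ?C = {}"
  proof (rule equals0I)
    fix c assume "c \<in> (?A \<union> padd (?K,0) ` ?B) \<inter> padd (0,?K) ` ?C"
    moreover obtain p q where "c = (p,q)" by (cases c)
    ultimately have "(p,q) \<in> sg_offs n \<or> (p - ?K, q) \<in> sg_offs n" "(p, q - ?K) \<in> sg_offs n" unfolding padd_img by auto
    then show False using offs_bounds[of p q n] offs_bounds[of "p - ?K" q n] offs_bounds[of p "q - ?K" n] by auto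
  qed
  have i1: "inj_on (padd (?K,0)) ?B" "inj_on (padd (0,?K)) ?C" unfolding inj_on_def padd_def by auto
  have "card (?A \<union> padd (?K,0) ` ?B \<union> padd (0,?K) ` ?C) = card ?A + card ?B + card ?C"
    using fin d1 d2 i1 by (simp add: card_Un_disjoint card_image)
  then show ?thesis unfolding cnt_def eq by simp
qed

lemma V_Suc_cases: "(x,y) \<in> sg_V (Suc n) \<Longrightarrow> (x,y) \<in> sg_V n \<or> (x - 2^n, y) \<in> sg_V n \<or> (x, y - 2^n) \<in> sg_V n"
proof -
  assume "(x,y) \<in> sg_V (Suc n)"
  then obtain c where c: "c \<in> sg_offs (Suc n)" "(x,y) \<in> up_tri c 1" unfolding sg_V_def by auto
  obtain p q where pq: "c = (p,q)" by (cases c)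
  from c(1) consider "(p,q) \<in> sg_offs n" | "(p - 2^n, q) \<in> sg_offs n" | "(p, q - 2^n) \<in> sg_offs n"
    unfolding pq offs_mem_Suc by blast
  then show ?thesis
  proof cases
    case 1 then show ?thesis using c(2) unfolding pq sg_V_def by blast
  next
    case 2
    have "(x - 2^n, y) \<in> up_tri (p - 2^n, q) 1" using c(2) unfolding pq up_tri_def by auto
    then show ?thesis using 2 unfolding sg_V_def by blast
  next
    case 3
    have "(x, y - 2^n) \<in> up_tri (p, q - 2^n) 1" using c(2) unfolding pq up_tri_def by auto
    then show ?thesis using 3 unfolding sg_V_def by blast
  qed
qed

lemma cnt_val: "z \<in> sg_V n \<Longrightarrow> cnt n z = (if z \<in> sg_V0 n then 1 else 2)"
proof (induction n arbitrary: z)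
  case 0
  then have "z \<in> up_tri (0,0) 1" unfolding sg_V_def by simp
  then have "{c \<in> sg_offs 0. z \<in> up_tri c 1} = {(0,0)}" by auto
  moreover have "z \<in> sg_V0 0" using \<open>z \<in> up_tri (0,0) 1\<close> unfolding sg_V0_def up_tri_def by auto
  ultimately show ?case unfolding cnt_def by simp
next
  case (Suc n)
  obtain x y where z: "z = (x,y)" by (cases z)
  let ?K = "(2::int)^n"
  define f where "f w = (if w \<in> sg_V n then (if w \<in> sg_V0 n then 1 else 2) else (0::nat))" for w
  have cf: "cnt n w = f w" for w using Suc.IH cnt_zero unfolding f_def by auto
  have K1: "?K \<ge> 1" by simp
  have V0n: "(0,0) \<in> sg_V n" "(?K,0) \<in> sg_V n" "(0,?K) \<in> sg_V n" using V0_sub unfolding sg_V0_def by auto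
  have b: "\<And>u v. (u,v) \<in> sg_V n \<Longrightarrow> 0 \<le> u \<and> 0 \<le> v \<and> u + v \<le> ?K" using V_bounds by blast
  have cases: "(x,y) \<in> sg_V n \<or> (x - ?K, y) \<in> sg_V n \<or> (x, y - ?K) \<in> sg_V n"
    using V_Suc_cases Suc.prems z by blast
  have "f (x,y) + f (x - ?K, y) + f (x, y - ?K) = (if (x,y) \<in> sg_V0 (Suc n) then 1 else 2)"
  proof -
    consider "(x,y) = (?K,0)" | "(x,y) = (0,?K)" | "(x,y) = (?K,?K)" |
      "(x,y) \<noteq> (?K,0)" "(x,y) \<noteq> (0,?K)" "(x,y) \<noteq> (?K,?K)" by blast
    then show ?thesis
    proof cases
      case 1 
      have "(?K, - ?K) \<notin> sg_V n" using b[of ?K "- ?K"] K1 by auto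
      then show ?thesis using 1 V0n K1 unfolding f_def sg_V0_def by auto
    next
      case 2
      have "(- ?K, ?K) \<notin> sg_V n" using b[of "- ?K" ?K] K1 by auto
      then show ?thesis using 2 V0n K1 unfolding f_def sg_V0_def by auto
    next
      case 3
      have "(?K, ?K) \<notin> sg_V n" using b[of ?K ?K] K1 by auto
      then show ?thesis using 3 V0n K1 unfolding f_def sg_V0_def by auto
    next
      case 4
      show ?thesis using cases
      proof (elim disjE)
        assume h: "(x,y) \<in> sg_V n"
        have n1: "(x - ?K, y) \<notin> sg_V n" using b[of x y] b[of "x - ?K" y] h 4 by auto
        have n2: "(x, y - ?K) \<notin> sg_V n" using b[of x y] b[of x "y - ?K"] h 4 by auto
        have "(x,y) \<in> sg_V0 n \<longleftrightarrow> (x,y) \<in> sg_V0 (Suc n)"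
          using b[of x y] h 4 K1 unfolding sg_V0_def by auto
        then show ?thesis using h n1 n2 unfolding f_def by auto
      next
        assume h: "(x - ?K,y) \<in> sg_V n"
        have n1: "(x, y) \<notin> sg_V n" using b[of x y] b[of "x - ?K" y] h 4 by auto
        have n2: "(x, y - ?K) \<notin> sg_V n" using b[of "x - ?K" y] b[of x "y - ?K"] h 4 by auto
        have "(x - ?K,y) \<in> sg_V0 n \<longleftrightarrow> (x,y) \<in> sg_V0 (Suc n)"
          using b[of "x - ?K" y] h 4 K1 unfolding sg_V0_def by auto
        then show ?thesis using h n1 n2 unfolding f_def by auto
      next
        assume h: "(x,y - ?K) \<in> sg_V n"
        have n1: "(x, y) \<notin> sg_V n" using b[of x y] b[of x "y - ?K"] h 4 by auto
        have n2: "(x - ?K, y) \<notin> sg_V n" using b[of "x - ?K" y] b[of x "y - ?K"] h 4 by auto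
        have "(x,y - ?K) \<in> sg_V0 n \<longleftrightarrow> (x,y) \<in> sg_V0 (Suc n)"
          using b[of x "y - ?K"] h 4 K1 unfolding sg_V0_def by auto
        then show ?thesis using h n1 n2 unfolding f_def by auto
      qed
    qed
  qed
  then show ?case unfolding z cnt_Suc cf by simp
qed

lemma Fc_inj: "Fc c i = Fc c i' \<Longrightarrow> i < 3 \<Longrightarrow> i' < 3 \<Longrightarrow> i = i'"
  by (cases c) (auto dest!: k3 simp: Fc_simp)

lemma Fc_iff: "(\<exists>i<3. (2*p,2*q) = Fc c i) \<longleftrightarrow> (p,q) \<in> up_tri c 1"
proof (cases c)
  case (Pair a b)
  show ?thesis unfolding Pair up_tri_def
  proof
    assume "\<exists>i<3. (2*p,2*q) = Fc (a,b) i"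
    then obtain i where "i < 3" "(2*p,2*q) = Fc (a,b) i" by blast
    then show "(p,q) \<in> {(a,b), padd (a,b) (1,0), padd (a,b) (0,1)}"
      by (auto dest!: k3 simp: Fc_simp)
  next
    assume "(p,q) \<in> {(a,b), padd (a,b) (1,0), padd (a,b) (0,1)}"
    then show "\<exists>i<3. (2*p,2*q) = Fc (a,b) i"
    proof (elim insertE emptyE)
      assume "(p,q) = (a,b)" then show ?thesis by (intro exI[of _ 0]) (simp add: Fc_simp)
    next
      assume "(p,q) = padd (a,b) (1,0)" then show ?thesis by (intro exI[of _ 1]) (simp add: Fc_simp)
    next
      assume "(p,q) = padd (a,b) (0,1)" then show ?thesis by (intro exI[of _ 2]) (simp add: Fc_simp)
    qed
  qed
qed

lemma Fc_form: "Fc c i = (2*(fst c + (if i = 1 then 1 else 0)), 2*(snd c + (if i \<noteq> 0 \<and> i \<noteq> 1 then 1 else 0)))"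
  by (cases c) (auto simp: Fc_simp algebra_simps)

lemma Fc_ev: "\<exists>p q. Fc c i = (2*p,2*q)"
  unfolding Fc_form by blast

lemma adj_cm_I: assumes "c \<in> sg_offs n" "i < 3" "k < 3" "ladj i k" shows "sg_adj (Suc n) (Fc c i) (Fm c k)"
proof -
  obtain a b where c: "c = (a,b)" by (cases c)
  have ab: "(a,b) \<in> sg_offs n" using assms(1) c by simp
  have "(i = 0 \<and> k = 0) \<or> (i = 0 \<and> k = 2) \<or> (i = 1 \<and> k = 0) \<or> (i = 1 \<and> k = 1) \<or> (i = 2 \<and> k = 1) \<or> (i = 2 \<and> k = 2)"
    using assms(4) unfolding ladj_def by auto
  then show ?thesis
  proof (elim disjE conjE)
    assume "i = 0" "k = 0" then show ?thesis unfolding c by (intro adj_I0[OF ab]) (auto simp: Fc_simp Fm_simp T0_def)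
  next
    assume "i = 0" "k = 2" then show ?thesis unfolding c by (intro adj_I0[OF ab]) (auto simp: Fc_simp Fm_simp T0_def)
  next
    assume "i = 1" "k = 0" then show ?thesis unfolding c by (intro adj_I1[OF ab]) (auto simp: Fc_simp Fm_simp T1_def)
  next
    assume "i = 1" "k = 1" then show ?thesis unfolding c by (intro adj_I1[OF ab]) (auto simp: Fc_simp Fm_simp T1_def)
  next
    assume "i = 2" "k = 1" then show ?thesis unfolding c by (intro adj_I2[OF ab]) (auto simp: Fc_simp Fm_simp T2_def)
  next
    assume "i = 2" "k = 2" then show ?thesis unfolding c by (intro adj_I2[OF ab]) (auto simp: Fc_simp Fm_simp T2_def)
  qed
qed

lemma LapV_mm_diff: "c \<noteq> c' \<Longrightarrow> k < 3 \<Longrightarrow> k' < 3 \<Longrightarrow> mag_lap (Suc n) \<omega> (Fm c k) (Fm c' k') = 0"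
  unfolding mag_lap_def using Fm_inj adj_mm by metis

lemma LapV_mm: "c \<in> sg_offs n \<Longrightarrow> k < 3 \<Longrightarrow> k' < 3 \<Longrightarrow>
   mag_lap (Suc n) \<omega> (Fm c k) (Fm c k') = (if k = k' then 1 else - (1/4) * \<omega> (Fm c k) (Fm c k'))"
  unfolding mag_lap_def using Fm_inj adj_mm_I Fm_notin_V0 by auto

lemma LapV_cm: assumes "c \<in> sg_offs n" "k < 3"
  shows "mag_lap (Suc n) \<omega> (2*p,2*q) (Fm c k) =
    (if \<exists>i<3. (2*p,2*q) = Fc c i \<and> ladj i k
     then (if (2*p,2*q) \<in> sg_V0 (Suc n) then - (1/2) else - (1/4)) * \<omega> (2*p,2*q) (Fm c k) else 0)"
proof -
  have ne: "(2*p,2*q) \<noteq> Fm c k" by (cases c) (auto simp: Fm_simp)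
  have "sg_adj (Suc n) (2*p,2*q) (Fm c k) \<longleftrightarrow> (\<exists>i<3. (2*p,2*q) = Fc c i \<and> ladj i k)"
    using adj_cm[OF _ assms(2)] adj_cm_I[OF assms(1) _ assms(2)] by metis
  then show ?thesis unfolding mag_lap_def using ne by auto
qed

lemma LapV_mc: assumes "c \<in> sg_offs n" "k < 3"
  shows "mag_lap (Suc n) \<omega> (Fm c k) (2*p,2*q) =
    (if \<exists>i<3. (2*p,2*q) = Fc c i \<and> ladj i k then - (1/4) * \<omega> (Fm c k) (2*p,2*q) else 0)"
proof -
  have ne: "Fm c k \<noteq> (2*p,2*q)" by (cases c) (auto simp: Fm_simp)
  have "sg_adj (Suc n) (Fm c k) (2*p,2*q) \<longleftrightarrow> (\<exists>i<3. (2*p,2*q) = Fc c i \<and> ladj i k)"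
    using adj_cm[OF _ assms(2)] adj_cm_I[OF assms(1) _ assms(2)] adj_sym by metis
  then show ?thesis unfolding mag_lap_def using ne Fm_notin_V0 by auto
qed

lemma LapV_cc: "mag_lap (Suc n) \<omega> (2*p,2*q) (2*p',2*q') = (if (p,q) = (p',q') then 1 else 0)"
  unfolding mag_lap_def using ev_ne_adj by auto

lemma shared: assumes "z \<noteq> z'" "z \<in> up_tri c 1" "z' \<in> up_tri c 1" "z \<in> up_tri c' 1" "z' \<in> up_tri c' 1"
  shows "c = c'"
proof -
  obtain a b a' b' where c: "c = (a,b)" "c' = (a',b')" by (cases c, cases c')
  obtain z1 z2 w1 w2 where z: "z = (z1,z2)" "z' = (w1,w2)" by (cases z, cases z')
  show ?thesis using assms unfolding c z up_tri_def padd_simp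
    by (elim insertE emptyE; simp)
qed

lemma midpt_Fc: "midpt (Fc c 0) (Fc c 1) = Fm c 0" "midpt (Fc c 1) (Fc c 2) = Fm c 1" "midpt (Fc c 2) (Fc c 0) = Fm c 2"
  "midpt (Fc c 1) (Fc c 0) = Fm c 0" "midpt (Fc c 2) (Fc c 1) = Fm c 1" "midpt (Fc c 0) (Fc c 2) = Fm c 2"
proof -
  obtain a b where c: "c = (a,b)" by (cases c)
  have d: "(2*x + (2*x + 2)) div 2 = 2*x+1" "(2*x + 2 + 2*x) div 2 = 2*x+1" "(2*x + 2*x) div 2 = 2*x"
    "(2*x + 2 + 2*x + 2) div 2 = 2*x + 2" for x :: int by presburger+
  show "midpt (Fc c 0) (Fc c 1) = Fm c 0" "midpt (Fc c 1) (Fc c 2) = Fm c 1" "midpt (Fc c 2) (Fc c 0) = Fm c 2"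
    "midpt (Fc c 1) (Fc c 0) = Fm c 0" "midpt (Fc c 2) (Fc c 1) = Fm c 1" "midpt (Fc c 0) (Fc c 2) = Fm c 2"
    unfolding c midpt_def Fc_simp Fm_simp by (simp_all add: d)
qed
definition det3 :: "(nat \<Rightarrow> nat \<Rightarrow> complex) \<Rightarrow> complex" where
  "det3 M = M 0 0 * M 1 1 * M 2 2 + M 0 1 * M 1 2 * M 2 0 + M 0 2 * M 1 0 * M 2 1
          - M 0 2 * M 1 1 * M 2 0 - M 0 1 * M 1 0 * M 2 2 - M 0 0 * M 1 2 * M 2 1"

definition adj3 :: "(nat \<Rightarrow> nat \<Rightarrow> complex) \<Rightarrow> nat \<Rightarrow> nat \<Rightarrow> complex" where
  "adj3 M i j =
    (if i = 0 then
       (if j = 0 then M 1 1 * M 2 2 - M 1 2 * M 2 1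
        else if j = 1 then M 0 2 * M 2 1 - M 0 1 * M 2 2
        else M 0 1 * M 1 2 - M 0 2 * M 1 1)
     else if i = 1 then
       (if j = 0 then M 1 2 * M 2 0 - M 1 0 * M 2 2
        else if j = 1 then M 0 0 * M 2 2 - M 0 2 * M 2 0
        else M 0 2 * M 1 0 - M 0 0 * M 1 2)
     else
       (if j = 0 then M 1 0 * M 2 1 - M 1 1 * M 2 0
        else if j = 1 then M 0 1 * M 2 0 - M 0 0 * M 2 1
        else M 0 0 * M 1 1 - M 0 1 * M 1 0))"

definition Rsum :: "(nat \<Rightarrow> nat \<Rightarrow> complex) \<Rightarrow> (nat \<Rightarrow> complex) \<Rightarrow> (nat \<Rightarrow> complex) \<Rightarrow> nat \<Rightarrow> nat \<Rightarrow> complex" where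
  "Rsum Ad rv cv i j = (\<Sum>k<3. \<Sum>k'<3. (if ladj i k then rv k else 0) * Ad k k' * (if ladj j k' then cv k' else 0))"

lemma sum3: "(\<Sum>k<3. f k) = f 0 + f 1 + (f 2 :: complex)" for f :: "nat \<Rightarrow> complex"
  by (simp add: numeral_3_eq_3 lessThan_Suc numeral_2_eq_2)

lemma det3_mult: "det3 (\<lambda>i j. \<Sum>k<3. A i k * B k j) = det3 A * det3 B"
  unfolding det3_def sum3 by (simp add: algebra_simps)


lemma adj3_right: "i < 3 \<Longrightarrow> j < 3 \<Longrightarrow> (\<Sum>k<3. A i k * adj3 A k j) = (if i = j then det3 A else 0)"
  unfolding sum3
  by (drule k3, drule k3, elim disjE; simp add: adj3_def det3_def algebra_simps)

lemma det3_inv_nz: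
  assumes "\<And>i j. i < 3 \<Longrightarrow> j < 3 \<Longrightarrow> (\<Sum>k<3. A i k * B k j) = (if i = j then 1 else 0)"
  shows "det3 A \<noteq> 0"
proof -
  have "det3 (\<lambda>i j. \<Sum>k<3. A i k * B k j) = 1"
    unfolding det3_def by (simp add: assms)
  then show ?thesis unfolding det3_mult by auto
qed

lemma cell_alg:
  fixes \<omega> :: "'a \<Rightarrow> 'a \<Rightarrow> complex" and A B :: "nat \<Rightarrow> 'a" and E F t :: complex
  assumes nz: "\<omega> (A 0) (B 0) \<noteq> 0" "\<omega> (B 2) (A 0) \<noteq> 0" "\<omega> (B 0) (A 1) \<noteq> 0" "\<omega> (A 1) (B 1) \<noteq> 0"
     "\<omega> (B 1) (A 2) \<noteq> 0" "\<omega> (A 2) (B 2) \<noteq> 0" "E \<noteq> 0"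
  and rev: "\<omega> (B 0) (A 0) = inverse (\<omega> (A 0) (B 0))" "\<omega> (A 0) (B 2) = inverse (\<omega> (B 2) (A 0))"
     "\<omega> (A 1) (B 0) = inverse (\<omega> (B 0) (A 1))" "\<omega> (B 1) (A 1) = inverse (\<omega> (A 1) (B 1))"
     "\<omega> (A 2) (B 1) = inverse (\<omega> (B 1) (A 2))" "\<omega> (B 2) (A 2) = inverse (\<omega> (A 2) (B 2))"
     "\<omega> (B 2) (B 0) = inverse (\<omega> (B 0) (B 2))" "\<omega> (B 0) (B 1) = inverse (\<omega> (B 1) (B 0))"
     "\<omega> (B 1) (B 2) = inverse (\<omega> (B 2) (B 1))"
  and fl: "\<omega> (A 0) (B 0) * \<omega> (B 0) (B 2) * \<omega> (B 2) (A 0) = E"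
     "\<omega> (B 0) (A 1) * \<omega> (A 1) (B 1) * \<omega> (B 1) (B 0) = E"
     "\<omega> (B 2) (B 1) * \<omega> (B 1) (A 2) * \<omega> (A 2) (B 2) = E"
     "\<omega> (B 0) (B 1) * \<omega> (B 1) (B 2) * \<omega> (B 2) (B 0) = F"
  and Mx: "\<And>k k'. k < 3 \<Longrightarrow> k' < 3 \<Longrightarrow> Mx k k' = (if k = k' then t else - (1/4) * \<omega> (B k) (B k'))"
  defines "Psi \<equiv> t^2 - 1/16 + t/4 * (2/E + 1/(E^2*F)) + 1/16 * (1/E^2 + 2/(E*F))"
  defines "Psic \<equiv> t^2 - 1/16 + t/4 * (2*E + E^2*F) + 1/16 * (E^2 + 2*E*F)"
  defines "A8 \<equiv> (16*(1-t)^2 - (32 + 2*(E+1/E))*(1-t) + 15 + 2*(E+1/E) + (E*F + 1/(E*F))/2)/8"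
  shows "det3 Mx = t^3 - 3*t/16 - (F + 1/F)/64"
    and "Rsum (adj3 Mx) (\<lambda>k. \<omega> (A 0) (B k)) (\<lambda>k. \<omega> (B k) (A 0)) 0 0 = A8"
    and "Rsum (adj3 Mx) (\<lambda>k. \<omega> (A 1) (B k)) (\<lambda>k. \<omega> (B k) (A 1)) 1 1 = A8"
    and "Rsum (adj3 Mx) (\<lambda>k. \<omega> (A 2) (B k)) (\<lambda>k. \<omega> (B k) (A 2)) 2 2 = A8"
    and "Rsum (adj3 Mx) (\<lambda>k. \<omega> (A 0) (B k)) (\<lambda>k. \<omega> (B k) (A 1)) 0 1 = Psi * \<omega> (A 0) (B 0) * \<omega> (B 0) (A 1)"
    and "Rsum (adj3 Mx) (\<lambda>k. \<omega> (A 1) (B k)) (\<lambda>k. \<omega> (B k) (A 2)) 1 2 = Psi * \<omega> (A 1) (B 1) * \<omega> (B 1) (A 2)"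
    and "Rsum (adj3 Mx) (\<lambda>k. \<omega> (A 2) (B k)) (\<lambda>k. \<omega> (B k) (A 0)) 2 0 = Psi * \<omega> (A 2) (B 2) * \<omega> (B 2) (A 0)"
    and "Rsum (adj3 Mx) (\<lambda>k. \<omega> (A 1) (B k)) (\<lambda>k. \<omega> (B k) (A 0)) 1 0 = Psic * \<omega> (A 1) (B 0) * \<omega> (B 0) (A 0)"
    and "Rsum (adj3 Mx) (\<lambda>k. \<omega> (A 2) (B k)) (\<lambda>k. \<omega> (B k) (A 1)) 2 1 = Psic * \<omega> (A 2) (B 1) * \<omega> (B 1) (A 1)"
    and "Rsum (adj3 Mx) (\<lambda>k. \<omega> (A 0) (B k)) (\<lambda>k. \<omega> (B k) (A 2)) 0 2 = Psic * \<omega> (A 0) (B 2) * \<omega> (B 2) (A 2)"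
proof -
  define u1 where "u1 = \<omega> (A 0) (B 0)"
  define u3 where "u3 = \<omega> (B 2) (A 0)"
  define y1 where "y1 = \<omega> (B 0) (A 1)"
  define y2 where "y2 = \<omega> (A 1) (B 1)"
  define w2 where "w2 = \<omega> (B 1) (A 2)"
  define w3 where "w3 = \<omega> (A 2) (B 2)"
  have nz': "u1 \<noteq> 0" "u3 \<noteq> 0" "y1 \<noteq> 0" "y2 \<noteq> 0" "w2 \<noteq> 0" "w3 \<noteq> 0"
    using nz by (simp_all add: u1_def u3_def y1_def y2_def w2_def w3_def)
  have e1: "\<omega> (B 0) (B 2) = E / (u1*u3)"
    using fl(1) nz' unfolding u1_def u3_def by (auto simp: field_simps)
  have e2: "\<omega> (B 1) (B 0) = E / (y1*y2)"
    using fl(2) nz' unfolding y1_def y2_def by (auto simp: field_simps)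
  have e3: "\<omega> (B 2) (B 1) = E / (w2*w3)"
    using fl(3) nz' unfolding w2_def w3_def by (auto simp: field_simps)
  have Feq: "F = (y1*y2/E) * (w2*w3/E) * (u1*u3/E)"
    using fl(4) unfolding rev e1 e2 e3 by (simp add: field_simps)
  have b: "\<omega> (B 0) (B 1) = y1*y2/E" "\<omega> (B 1) (B 0) = E/(y1*y2)"
    "\<omega> (B 1) (B 2) = w2*w3/E" "\<omega> (B 2) (B 1) = E/(w2*w3)"
    "\<omega> (B 0) (B 2) = E/(u1*u3)" "\<omega> (B 2) (B 0) = u1*u3/E"
    by (simp_all only: rev e1 e2 e3) (simp_all add: field_simps)
  have M0: "Mx 0 0 = t" "Mx 1 1 = t" "Mx 2 2 = t"
    "Mx 0 1 = -(1/4) * \<omega> (B 0) (B 1)" "Mx 1 0 = -(1/4) * \<omega> (B 1) (B 0)"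
    "Mx 1 2 = -(1/4) * \<omega> (B 1) (B 2)" "Mx 2 1 = -(1/4) * \<omega> (B 2) (B 1)"
    "Mx 0 2 = -(1/4) * \<omega> (B 0) (B 2)" "Mx 2 0 = -(1/4) * \<omega> (B 2) (B 0)"
    by (simp_all add: Mx)
  have M: "Mx 0 0 = t" "Mx 1 1 = t" "Mx 2 2 = t"
    "Mx 0 1 = -(1/4) * (y1*y2/E)" "Mx 1 0 = -(1/4) * (E/(y1*y2))"
    "Mx 1 2 = -(1/4) * (w2*w3/E)" "Mx 2 1 = -(1/4) * (E/(w2*w3))"
    "Mx 0 2 = -(1/4) * (E/(u1*u3))" "Mx 2 0 = -(1/4) * (u1*u3/E)"
    unfolding M0 b by simp_all
  have W: "\<omega> (A 0) (B 0) = u1" "\<omega> (B 0) (A 0) = 1/u1" "\<omega> (B 2) (A 0) = u3" "\<omega> (A 0) (B 2) = 1/u3"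
    "\<omega> (B 0) (A 1) = y1" "\<omega> (A 1) (B 0) = 1/y1" "\<omega> (A 1) (B 1) = y2" "\<omega> (B 1) (A 1) = 1/y2"
    "\<omega> (B 1) (A 2) = w2" "\<omega> (A 2) (B 1) = 1/w2" "\<omega> (A 2) (B 2) = w3" "\<omega> (B 2) (A 2) = 1/w3"
    by (simp_all only: rev u1_def u3_def y1_def y2_def w2_def w3_def inverse_eq_divide)
  show "det3 Mx = t^3 - 3*t/16 - (F + 1/F)/64"
    unfolding det3_def M Feq using nz' \<open>E \<noteq> 0\<close>
    by (simp add: field_simps) (simp add: algebra_simps eval_nat_numeral)
  show "Rsum (adj3 Mx) (\<lambda>k. \<omega> (A 0) (B k)) (\<lambda>k. \<omega> (B k) (A 0)) 0 0 = A8"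
    unfolding Rsum_def sum3 ladj_def adj3_def A8_def
    apply (simp add: M W M[unfolded One_nat_def] W[unfolded One_nat_def])
    unfolding Feq using nz' \<open>E \<noteq> 0\<close>
    by (simp add: field_simps) (simp add: algebra_simps eval_nat_numeral)
  show "Rsum (adj3 Mx) (\<lambda>k. \<omega> (A 1) (B k)) (\<lambda>k. \<omega> (B k) (A 1)) 1 1 = A8"
    unfolding Rsum_def sum3 ladj_def adj3_def A8_def Psi_def Psic_def
    apply (simp add: M W M[unfolded One_nat_def] W[unfolded One_nat_def])
    unfolding Feq using nz' \<open>E \<noteq> 0\<close>
    by (simp add: field_simps) (simp add: algebra_simps eval_nat_numeral)
  show "Rsum (adj3 Mx) (\<lambda>k. \<omega> (A 2) (B k)) (\<lambda>k. \<omega> (B k) (A 2)) 2 2 = A8"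
    unfolding Rsum_def sum3 ladj_def adj3_def A8_def Psi_def Psic_def
    apply (simp add: M W M[unfolded One_nat_def] W[unfolded One_nat_def])
    unfolding Feq using nz' \<open>E \<noteq> 0\<close>
    by (simp add: field_simps) (simp add: algebra_simps eval_nat_numeral)
  show "Rsum (adj3 Mx) (\<lambda>k. \<omega> (A 0) (B k)) (\<lambda>k. \<omega> (B k) (A 1)) 0 1 = Psi * \<omega> (A 0) (B 0) * \<omega> (B 0) (A 1)"
    unfolding Rsum_def sum3 ladj_def adj3_def A8_def Psi_def Psic_def
    apply (simp add: M W M[unfolded One_nat_def] W[unfolded One_nat_def])
    unfolding Feq using nz' \<open>E \<noteq> 0\<close>
    by (simp add: field_simps) (simp add: algebra_simps eval_nat_numeral)
  show "Rsum (adj3 Mx) (\<lambda>k. \<omega> (A 1) (B k)) (\<lambda>k. \<omega> (B k) (A 2)) 1 2 = Psi * \<omega> (A 1) (B 1) * \<omega> (B 1) (A 2)"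
    unfolding Rsum_def sum3 ladj_def adj3_def A8_def Psi_def Psic_def
    apply (simp add: M W M[unfolded One_nat_def] W[unfolded One_nat_def])
    unfolding Feq using nz' \<open>E \<noteq> 0\<close>
    by (simp add: field_simps) (simp add: algebra_simps eval_nat_numeral)
  show "Rsum (adj3 Mx) (\<lambda>k. \<omega> (A 2) (B k)) (\<lambda>k. \<omega> (B k) (A 0)) 2 0 = Psi * \<omega> (A 2) (B 2) * \<omega> (B 2) (A 0)"
    unfolding Rsum_def sum3 ladj_def adj3_def A8_def Psi_def Psic_def
    apply (simp add: M W M[unfolded One_nat_def] W[unfolded One_nat_def])
    unfolding Feq using nz' \<open>E \<noteq> 0\<close>
    by (simp add: field_simps) (simp add: algebra_simps eval_nat_numeral)
  show "Rsum (adj3 Mx) (\<lambda>k. \<omega> (A 1) (B k)) (\<lambda>k. \<omega> (B k) (A 0)) 1 0 = Psic * \<omega> (A 1) (B 0) * \<omega> (B 0) (A 0)"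
    unfolding Rsum_def sum3 ladj_def adj3_def A8_def Psi_def Psic_def
    apply (simp add: M W M[unfolded One_nat_def] W[unfolded One_nat_def])
    unfolding Feq using nz' \<open>E \<noteq> 0\<close>
    by (simp add: field_simps) (simp add: algebra_simps eval_nat_numeral)
  show "Rsum (adj3 Mx) (\<lambda>k. \<omega> (A 2) (B k)) (\<lambda>k. \<omega> (B k) (A 1)) 2 1 = Psic * \<omega> (A 2) (B 1) * \<omega> (B 1) (A 1)"
    unfolding Rsum_def sum3 ladj_def adj3_def A8_def Psi_def Psic_def
    apply (simp add: M W M[unfolded One_nat_def] W[unfolded One_nat_def])
    unfolding Feq using nz' \<open>E \<noteq> 0\<close>
    by (simp add: field_simps) (simp add: algebra_simps eval_nat_numeral)
  show "Rsum (adj3 Mx) (\<lambda>k. \<omega> (A 0) (B k)) (\<lambda>k. \<omega> (B k) (A 2)) 0 2 = Psic * \<omega> (A 0) (B 2) * \<omega> (B 2) (A 2)"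
    unfolding Rsum_def sum3 ladj_def adj3_def A8_def Psi_def Psic_def
    apply (simp add: M W M[unfolded One_nat_def] W[unfolded One_nat_def])
    unfolding Feq using nz' \<open>E \<noteq> 0\<close>
    by (simp add: field_simps) (simp add: algebra_simps eval_nat_numeral)
qed

definition Eexp :: "real \<Rightarrow> complex" where "Eexp x = exp (complex_of_real (2 * pi) * \<i> * complex_of_real x)"

lemma Eexp_nz: "Eexp x \<noteq> 0" unfolding Eexp_def by simp

lemma Eexp_add: "Eexp (x + y) = Eexp x * Eexp y"
  unfolding Eexp_def by (simp add: distrib_left exp_add)

lemma Eexp_norm: "norm (Eexp x) = 1"
  unfolding Eexp_def by (simp add: norm_exp_eq_Re)

lemma unit_cnj: "norm z = 1 \<Longrightarrow> cnj z = 1 / z"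
proof -
  assume "norm z = 1"
  then have "z * cnj z = 1" using complex_norm_square[of z] by simp
  moreover have "z \<noteq> 0" using \<open>norm z = 1\<close> by auto
  ultimately show ?thesis by (simp add: field_simps)
qed

lemma cnj_Eexp: "cnj (Eexp x) = 1 / Eexp x" using unit_cnj Eexp_norm by blast

lemma cos_E: "complex_of_real (cos (2*pi*x)) = (Eexp x + 1 / Eexp x) / 2"
proof -
  have "complex_of_real (cos (2*pi*x)) = cos (complex_of_real (2*pi*x))" by (simp only: cos_of_real)
  also have "\<dots> = (exp (\<i> * complex_of_real (2*pi*x)) + exp (- (\<i> * complex_of_real (2*pi*x)))) / 2"
    by (rule cos_exp_eq)
  also have "\<i> * complex_of_real (2*pi*x) = complex_of_real (2 * pi) * \<i> * complex_of_real x" by simp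
  finally show ?thesis unfolding Eexp_def by (simp add: exp_minus inverse_eq_divide)
qed

lemma Psi_E: "Psi_fun \<alpha> \<beta> lam = (1 - complex_of_real lam)^2 - 1/16
   + (1 - complex_of_real lam)/4 * (2 / Eexp \<alpha> + 1 / (Eexp \<alpha>^2 * Eexp \<beta>))
   + 1/16 * (1 / Eexp \<alpha>^2 + 2 / (Eexp \<alpha> * Eexp \<beta>))"
proof -
  define X where "X = complex_of_real (2 * pi) * \<i> * complex_of_real \<alpha>"
  define Y where "Y = complex_of_real (2 * pi) * \<i> * complex_of_real \<beta>"
  have EX: "Eexp \<alpha> = exp X" "Eexp \<beta> = exp Y" unfolding Eexp_def X_def Y_def by simp_all
  have a1: "complex_of_real (- 2 * pi) * \<i> * complex_of_real \<alpha> = - X" unfolding X_def by simp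
  have a2: "complex_of_real (- 2 * pi) * \<i> * (2 * complex_of_real \<alpha> + complex_of_real \<beta>) = - (X + X + Y)"
    unfolding X_def Y_def by (simp add: algebra_simps)
  have a3: "complex_of_real (- 4 * pi) * \<i> * complex_of_real \<alpha> = - (X + X)"
    unfolding X_def by (simp add: algebra_simps)
  have a4: "complex_of_real (- 2 * pi) * \<i> * (complex_of_real \<alpha> + complex_of_real \<beta>) = - (X + Y)"
    unfolding X_def Y_def by (simp add: algebra_simps)
  show ?thesis unfolding Psi_fun_def a1 a2 a3 a4 EX
    by (simp only: exp_minus exp_add inverse_eq_divide) (simp add: field_simps power2_eq_square)
qed

lemma cnj_Psi: "cnj (Psi_fun \<alpha> \<beta> lam) = (1 - complex_of_real lam)^2 - 1/16
   + (1 - complex_of_real lam)/4 * (2 * Eexp \<alpha> + Eexp \<alpha>^2 * Eexp \<beta>)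
   + 1/16 * (Eexp \<alpha>^2 + 2 * (Eexp \<alpha> * Eexp \<beta>))"
  unfolding Psi_E using Eexp_nz[of \<alpha>] Eexp_nz[of \<beta>]
  by (simp add: cnj_Eexp field_simps)

lemma A_E: "complex_of_real (A_fun \<alpha> \<beta> lam) =
   16 * (complex_of_real lam)^2 - (32 + 2 * (Eexp \<alpha> + 1 / Eexp \<alpha>)) * complex_of_real lam + 15
   + 2 * (Eexp \<alpha> + 1 / Eexp \<alpha>) + (Eexp \<alpha> * Eexp \<beta> + 1 / (Eexp \<alpha> * Eexp \<beta>)) / 2"
proof -
  have c1: "complex_of_real (cos (2*pi*\<alpha>)) = (Eexp \<alpha> + 1 / Eexp \<alpha>) / 2" by (rule cos_E)
  have c2: "complex_of_real (cos (2*pi*(\<alpha>+\<beta>))) = (Eexp \<alpha> * Eexp \<beta> + 1 / (Eexp \<alpha> * Eexp \<beta>)) / 2"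
    using cos_E[of "\<alpha>+\<beta>"] by (simp add: Eexp_add)
  show ?thesis unfolding A_fun_def of_real_add of_real_diff of_real_mult of_real_power c1 c2 of_real_numeral
    using Eexp_nz[of \<alpha>] by (simp add: field_simps)
qed

lemma D_E: "complex_of_real (D_fun \<beta> lam) =
   (1 - complex_of_real lam)^3 - 3 * (1 - complex_of_real lam) / 16 - (Eexp \<beta> + 1 / Eexp \<beta>) / 64"
proof -
  have c1: "complex_of_real (cos (2*pi*\<beta>)) = (Eexp \<beta> + 1 / Eexp \<beta>) / 2" by (rule cos_E)
  show ?thesis unfolding D_fun_def of_real_add of_real_diff of_real_mult of_real_power c1 of_real_numeral
    of_real_minus of_real_divide
    by (simp add: field_simps power3_eq_cube power2_eq_square)
qed

lemma flux_adj: assumes "flux_connection n \<alpha> \<beta> \<omega>" "sg_adj n x y"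
  shows "\<omega> x y \<noteq> 0" "\<omega> y x = inverse (\<omega> x y)"
proof -
  have h: "norm (\<omega> x y) = 1" "\<omega> y x = cnj (\<omega> x y)" using assms unfolding flux_connection_def by blast+
  then show "\<omega> x y \<noteq> 0" by auto
  show "\<omega> y x = inverse (\<omega> x y)" using h unit_cnj by (simp add: inverse_eq_divide)
qed

definition Mloc :: "nat \<Rightarrow> (vtx \<Rightarrow> vtx \<Rightarrow> complex) \<Rightarrow> real \<Rightarrow> vtx \<Rightarrow> nat \<Rightarrow> nat \<Rightarrow> complex" where
  "Mloc n \<omega> lam c k k' = shifted_block (Suc n) \<omega> lam (Fm c k) (Fm c k')"

lemma Mloc_val: "c \<in> sg_offs n \<Longrightarrow> k < 3 \<Longrightarrow> k' < 3 \<Longrightarrow>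
  Mloc n \<omega> lam c k k' = (if k = k' then 1 - complex_of_real lam else - (1/4) * \<omega> (Fm c k) (Fm c k'))"
  unfolding Mloc_def shifted_block_def using LapV_mm[of c n k k' \<omega>] Fm_inj[of c k c k'] by auto

lemma cell_facts:
  fixes lam :: real
  assumes fc: "flux_connection (Suc n) \<alpha> \<beta> \<omega>" and c: "c \<in> sg_offs n"
  defines "E \<equiv> Eexp \<alpha>" and "F \<equiv> Eexp \<beta>" and "t \<equiv> 1 - complex_of_real lam"
  defines "A \<equiv> Fc c" and "B \<equiv> Fm c"
  defines "Psi \<equiv> t^2 - 1/16 + t/4 * (2/E + 1/(E^2*F)) + 1/16 * (1/E^2 + 2/(E*F))"
  defines "Psic \<equiv> t^2 - 1/16 + t/4 * (2*E + E^2*F) + 1/16 * (E^2 + 2*E*F)"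
  defines "A8 \<equiv> (16*(1-t)^2 - (32 + 2*(E+1/E))*(1-t) + 15 + 2*(E+1/E) + (E*F + 1/(E*F))/2)/8"
  defines "Mx \<equiv> Mloc n \<omega> lam c"
  shows "det3 Mx = t^3 - 3*t/16 - (F + 1/F)/64"
    and "Rsum (adj3 Mx) (\<lambda>k. \<omega> (A 0) (B k)) (\<lambda>k. \<omega> (B k) (A 0)) 0 0 = A8"
    and "Rsum (adj3 Mx) (\<lambda>k. \<omega> (A 1) (B k)) (\<lambda>k. \<omega> (B k) (A 1)) 1 1 = A8"
    and "Rsum (adj3 Mx) (\<lambda>k. \<omega> (A 2) (B k)) (\<lambda>k. \<omega> (B k) (A 2)) 2 2 = A8"
    and "Rsum (adj3 Mx) (\<lambda>k. \<omega> (A 0) (B k)) (\<lambda>k. \<omega> (B k) (A 1)) 0 1 = Psi * \<omega> (A 0) (B 0) * \<omega> (B 0) (A 1)"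
    and "Rsum (adj3 Mx) (\<lambda>k. \<omega> (A 1) (B k)) (\<lambda>k. \<omega> (B k) (A 2)) 1 2 = Psi * \<omega> (A 1) (B 1) * \<omega> (B 1) (A 2)"
    and "Rsum (adj3 Mx) (\<lambda>k. \<omega> (A 2) (B k)) (\<lambda>k. \<omega> (B k) (A 0)) 2 0 = Psi * \<omega> (A 2) (B 2) * \<omega> (B 2) (A 0)"
    and "Rsum (adj3 Mx) (\<lambda>k. \<omega> (A 1) (B k)) (\<lambda>k. \<omega> (B k) (A 0)) 1 0 = Psic * \<omega> (A 1) (B 0) * \<omega> (B 0) (A 0)"
    and "Rsum (adj3 Mx) (\<lambda>k. \<omega> (A 2) (B k)) (\<lambda>k. \<omega> (B k) (A 1)) 2 1 = Psic * \<omega> (A 2) (B 1) * \<omega> (B 1) (A 1)"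
    and "Rsum (adj3 Mx) (\<lambda>k. \<omega> (A 0) (B k)) (\<lambda>k. \<omega> (B k) (A 2)) 0 2 = Psic * \<omega> (A 0) (B 2) * \<omega> (B 2) (A 2)"
proof -
  obtain a b where ab: "c = (a,b)" by (cases c)
  have adjAB: "sg_adj (Suc n) (A i) (B k)" if "i < 3" "k < 3" "ladj i k" for i k
    unfolding A_def B_def using adj_cm_I[OF c that] .
  have adjBA: "sg_adj (Suc n) (B k) (A i)" if "i < 3" "k < 3" "ladj i k" for i k
    using adjAB[OF that] adj_sym by metis
  have adjBB: "sg_adj (Suc n) (B k) (B k')" if "k < 3" "k' < 3" "k \<noteq> k'" for k k'
    unfolding B_def using adj_mm_I[OF c that] .
  note fa = flux_adj[OF fc]
  have l: "ladj 0 0" "ladj 0 2" "ladj 1 0" "ladj 1 1" "ladj 2 1" "ladj 2 2" unfolding ladj_def by simp_all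
  have nz: "\<omega> (A 0) (B 0) \<noteq> 0" "\<omega> (B 2) (A 0) \<noteq> 0" "\<omega> (B 0) (A 1) \<noteq> 0" "\<omega> (A 1) (B 1) \<noteq> 0"
     "\<omega> (B 1) (A 2) \<noteq> 0" "\<omega> (A 2) (B 2) \<noteq> 0" "E \<noteq> 0"
    using fa(1)[OF adjAB[OF _ _ l(1)]] fa(1)[OF adjBA[OF _ _ l(2)]] fa(1)[OF adjBA[OF _ _ l(3)]]
      fa(1)[OF adjAB[OF _ _ l(4)]] fa(1)[OF adjBA[OF _ _ l(5)]] fa(1)[OF adjAB[OF _ _ l(6)]]
      Eexp_nz unfolding E_def by auto
  have rev: "\<omega> (B 0) (A 0) = inverse (\<omega> (A 0) (B 0))" "\<omega> (A 0) (B 2) = inverse (\<omega> (B 2) (A 0))"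
     "\<omega> (A 1) (B 0) = inverse (\<omega> (B 0) (A 1))" "\<omega> (B 1) (A 1) = inverse (\<omega> (A 1) (B 1))"
     "\<omega> (A 2) (B 1) = inverse (\<omega> (B 1) (A 2))" "\<omega> (B 2) (A 2) = inverse (\<omega> (A 2) (B 2))"
     "\<omega> (B 2) (B 0) = inverse (\<omega> (B 0) (B 2))" "\<omega> (B 0) (B 1) = inverse (\<omega> (B 1) (B 0))"
     "\<omega> (B 1) (B 2) = inverse (\<omega> (B 2) (B 1))"
    using fa(2)[OF adjAB[OF _ _ l(1)]] fa(2)[OF adjBA[OF _ _ l(2)]] fa(2)[OF adjBA[OF _ _ l(3)]]
      fa(2)[OF adjAB[OF _ _ l(4)]] fa(2)[OF adjBA[OF _ _ l(5)]] fa(2)[OF adjAB[OF _ _ l(6)]]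
      fa(2)[OF adjBB[of 0 2]] fa(2)[OF adjBB[of 1 0]] fa(2)[OF adjBB[of 2 1]] by auto
  have offs: "(2*a,2*b) \<in> sg_offs (Suc n)" "(2*a+1,2*b) \<in> sg_offs (Suc n)" "(2*a,2*b+1) \<in> sg_offs (Suc n)"
    unfolding offs_Suc using c ab by blast+
  have up: "\<forall>c\<in>sg_offs (Suc n). \<omega> c (padd c (1,0)) * \<omega> (padd c (1,0)) (padd c (0,1)) * \<omega> (padd c (0,1)) c = E"
    using fc unfolding flux_connection_def E_def Eexp_def by blast
  have dn: "\<forall>c. let p = padd c (1,0); r = padd c (1,1); q = padd c (0,1) in
        sg_adj (Suc n) p r \<and> sg_adj (Suc n) r q \<and> sg_adj (Suc n) q p \<longrightarrow> \<omega> p r * \<omega> r q * \<omega> q p = F"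
    using fc unfolding flux_connection_def F_def Eexp_def by blast
  have fl1: "\<omega> (A 0) (B 0) * \<omega> (B 0) (B 2) * \<omega> (B 2) (A 0) = E"
    using bspec[OF up offs(1)] unfolding A_def B_def ab Fc_simp Fm_simp by simp
  have fl2: "\<omega> (B 0) (A 1) * \<omega> (A 1) (B 1) * \<omega> (B 1) (B 0) = E"
    using bspec[OF up offs(2)] unfolding A_def B_def ab Fc_simp Fm_simp by (simp add: algebra_simps)
  have fl3: "\<omega> (B 2) (B 1) * \<omega> (B 1) (A 2) * \<omega> (A 2) (B 2) = E"
    using bspec[OF up offs(3)] unfolding A_def B_def ab Fc_simp Fm_simp by (simp add: algebra_simps)
  have dadj: "sg_adj (Suc n) (B 0) (B 1)" "sg_adj (Suc n) (B 1) (B 2)" "sg_adj (Suc n) (B 2) (B 0)"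
    using adjBB by auto
  have fl4: "\<omega> (B 0) (B 1) * \<omega> (B 1) (B 2) * \<omega> (B 2) (B 0) = F"
    using spec[OF dn, of "(2*a,2*b)"] dadj unfolding B_def ab Fm_simp Let_def by simp
  have Mx: "\<And>k k'. k < 3 \<Longrightarrow> k' < 3 \<Longrightarrow> Mx k k' = (if k = k' then t else - (1/4) * \<omega> (B k) (B k'))"
    unfolding Mx_def t_def B_def using Mloc_val[OF c] by simp
  note R = cell_alg[of \<omega> A B E, OF nz rev fl1 fl2 fl3 fl4 Mx]
  show "det3 Mx = t^3 - 3*t/16 - (F + 1/F)/64" by (rule R(1))
  show "Rsum (adj3 Mx) (\<lambda>k. \<omega> (A 0) (B k)) (\<lambda>k. \<omega> (B k) (A 0)) 0 0 = A8" unfolding A8_def by (rule R(2))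
  show "Rsum (adj3 Mx) (\<lambda>k. \<omega> (A 1) (B k)) (\<lambda>k. \<omega> (B k) (A 1)) 1 1 = A8" unfolding A8_def by (rule R(3))
  show "Rsum (adj3 Mx) (\<lambda>k. \<omega> (A 2) (B k)) (\<lambda>k. \<omega> (B k) (A 2)) 2 2 = A8" unfolding A8_def by (rule R(4))
  show "Rsum (adj3 Mx) (\<lambda>k. \<omega> (A 0) (B k)) (\<lambda>k. \<omega> (B k) (A 1)) 0 1 = Psi * \<omega> (A 0) (B 0) * \<omega> (B 0) (A 1)" unfolding Psi_def by (rule R(5))
  show "Rsum (adj3 Mx) (\<lambda>k. \<omega> (A 1) (B k)) (\<lambda>k. \<omega> (B k) (A 2)) 1 2 = Psi * \<omega> (A 1) (B 1) * \<omega> (B 1) (A 2)" unfolding Psi_def by (rule R(6))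
  show "Rsum (adj3 Mx) (\<lambda>k. \<omega> (A 2) (B k)) (\<lambda>k. \<omega> (B k) (A 0)) 2 0 = Psi * \<omega> (A 2) (B 2) * \<omega> (B 2) (A 0)" unfolding Psi_def by (rule R(7))
  show "Rsum (adj3 Mx) (\<lambda>k. \<omega> (A 1) (B k)) (\<lambda>k. \<omega> (B k) (A 0)) 1 0 = Psic * \<omega> (A 1) (B 0) * \<omega> (B 0) (A 0)" unfolding Psic_def by (rule R(8))
  show "Rsum (adj3 Mx) (\<lambda>k. \<omega> (A 2) (B k)) (\<lambda>k. \<omega> (B k) (A 1)) 2 1 = Psic * \<omega> (A 2) (B 1) * \<omega> (B 1) (A 1)" unfolding Psic_def by (rule R(9))
  show "Rsum (adj3 Mx) (\<lambda>k. \<omega> (A 0) (B k)) (\<lambda>k. \<omega> (B k) (A 2)) 0 2 = Psic * \<omega> (A 0) (B 2) * \<omega> (B 2) (A 2)" unfolding Psic_def by (rule R(10))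
qed

lemma Qval_gen:
  assumes "\<And>k. k < 3 \<Longrightarrow> Lr k = (if ladj i k then - \<kappa> * wr k else 0)"
    and "\<And>k. k < 3 \<Longrightarrow> Lc k = (if ladj j k then - (1/4) * wc k else 0)"
  shows "(\<Sum>k<3. \<Sum>k'<3. Lr k * (Ad k k' / D) * Lc k') = \<kappa>/4 * Rsum Ad wr wc i j / D"
proof -
  have "(\<Sum>k<3. \<Sum>k'<3. Lr k * (Ad k k' / D) * Lc k') =
        (\<Sum>k<3. \<Sum>k'<3. \<kappa>/4 * ((if ladj i k then wr k else 0) * Ad k k' * (if ladj j k' then wc k' else 0)) / D)"
  proof (intro sum.cong refl)
    fix k k' assume "k \<in> {..<3::nat}" "k' \<in> {..<3::nat}"
    then show "Lr k * (Ad k k' / D) * Lc k' = \<kappa>/4 * ((if ladj i k then wr k else 0) * Ad k k' * (if ladj j k' then wc k' else 0)) / D"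
      unfolding assms(1)[of k, OF \<open>k \<in> {..<3}\<close>[simplified]] assms(2)[of k', OF \<open>k' \<in> {..<3}\<close>[simplified]]
      by (cases "ladj i k"; cases "ladj j k'"; simp add: field_simps)
  qed
  also have "\<dots> = \<kappa>/4 * Rsum Ad wr wc i j / D"
    unfolding Rsum_def by (simp add: sum_distrib_left sum_divide_distrib)
  finally show ?thesis .
qed

lemma sum_single: "finite A \<Longrightarrow> a \<in> A \<Longrightarrow> (\<And>x. x \<in> A \<Longrightarrow> x \<noteq> a \<Longrightarrow> f x = 0) \<Longrightarrow> sum f A = f a"
  by (simp add: sum.remove sum.neutral)

lemma ccw_Fc: "ccw_in (pscale 2 c) 2 x y \<longleftrightarrow>
   (x = Fc c 0 \<and> y = Fc c 1) \<or> (x = Fc c 1 \<and> y = Fc c 2) \<or> (x = Fc c 2 \<and> y = Fc c 0)"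
  by (cases c) (simp add: ccw_in_def Fc_simp)

theorem proposition3p1:
  fixes N :: nat and \<alpha> \<beta> lam :: real
    and \<omega> Dinv :: "vtx \<Rightarrow> vtx \<Rightarrow> complex"
  assumes "N \<ge> 1"
    and "flux_connection N \<alpha> \<beta> \<omega>"
    and "inverse_on (sg_V N - sg_Vnest N) (shifted_block N \<omega> lam) Dinv"
  shows
    "(\<forall>a\<in>sg_Vnest N.
        schur N \<omega> lam Dinv a a
          = 1 - lam - A_fun \<alpha> \<beta> lam / (64 * D_fun \<beta> lam)) \<and>
     (\<forall>ai aj c. ai \<in> sg_Vnest N \<longrightarrow> aj \<in> sg_Vnest N \<longrightarrow> ai \<noteq> aj \<longrightarrow>
        c \<in> sg_cells_nest N \<longrightarrow> ccw_in c 2 ai aj \<longrightarrow> ai \<notin> sg_V0 N \<longrightarrow>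
        schur N \<omega> lam Dinv ai aj
          = - (Psi_fun \<alpha> \<beta> lam * \<omega> ai (midpt ai aj) * \<omega> (midpt ai aj) aj)
              / (16 * D_fun \<beta> lam)) \<and>
     (\<forall>ai aj c. ai \<in> sg_Vnest N \<longrightarrow> aj \<in> sg_Vnest N \<longrightarrow> ai \<noteq> aj \<longrightarrow>
        c \<in> sg_cells_nest N \<longrightarrow> ccw_in c 2 ai aj \<longrightarrow> ai \<in> sg_V0 N \<longrightarrow>
        schur N \<omega> lam Dinv ai aj
          = - (Psi_fun \<alpha> \<beta> lam * \<omega> ai (midpt ai aj) * \<omega> (midpt ai aj) aj)
              / (8 * D_fun \<beta> lam)) \<and>
     (\<forall>ai aj c. ai \<in> sg_Vnest N \<longrightarrow> aj \<in> sg_Vnest N \<longrightarrow> ai \<noteq> aj \<longrightarrow>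
        c \<in> sg_cells_nest N \<longrightarrow> ccw_in c 2 aj ai \<longrightarrow> ai \<notin> sg_V0 N \<longrightarrow>
        schur N \<omega> lam Dinv ai aj
          = - (cnj (Psi_fun \<alpha> \<beta> lam) * \<omega> ai (midpt ai aj) * \<omega> (midpt ai aj) aj)
              / (16 * D_fun \<beta> lam)) \<and>
     (\<forall>ai aj c. ai \<in> sg_Vnest N \<longrightarrow> aj \<in> sg_Vnest N \<longrightarrow> ai \<noteq> aj \<longrightarrow>
        c \<in> sg_cells_nest N \<longrightarrow> ccw_in c 2 aj ai \<longrightarrow> ai \<in> sg_V0 N \<longrightarrow>
        schur N \<omega> lam Dinv ai aj
          = - (cnj (Psi_fun \<alpha> \<beta> lam) * \<omega> ai (midpt ai aj) * \<omega> (midpt ai aj) aj)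
              / (8 * D_fun \<beta> lam))"
proof -
  obtain n where N: "N = Suc n" using assms(1) by (cases N) auto
  have fc: "flux_connection (Suc n) \<alpha> \<beta> \<omega>" using assms(2) unfolding N .
  have inv: "inverse_on (sg_V (Suc n) - sg_Vnest (Suc n)) (shifted_block (Suc n) \<omega> lam) Dinv"
    using assms(3) unfolding N .
  define S where "S = sg_offs n"
  define P where "P = S \<times> {..<3::nat}"
  define Fp where "Fp = (\<lambda>p::vtx \<times> nat. Fm (fst p) (snd p))"
  define M where "M = shifted_block (Suc n) \<omega> lam"
  define L where "L = mag_lap (Suc n) \<omega>"
  define t where "t = 1 - complex_of_real lam"
  define E where "E = Eexp \<alpha>"
  define F where "F = Eexp \<beta>"
  define Dc where "Dc = t^3 - 3*t/16 - (F + 1/F)/64"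
  define Ml where "Ml = Mloc n \<omega> lam"
  define W where "W = sg_V (Suc n) - sg_Vnest (Suc n)"
  have finS: "finite S" unfolding S_def by (rule offs_finite)
  have finP: "finite P" unfolding P_def using finS by simp
  have Weq: "W = Fp ` P"
    unfolding W_def W_eq P_def S_def Fp_def by (simp add: case_prod_beta')
  have injP: "inj_on Fp P"
    using Fm_inj_on[of n] unfolding P_def S_def Fp_def inj_on_def by (auto simp: case_prod_beta')
  have sumW: "(\<Sum>u\<in>W. g u) = (\<Sum>p\<in>P. g (Fp p))" for g :: "vtx \<Rightarrow> complex"
    unfolding Weq by (simp add: sum.reindex[OF injP])
  have sumP: "(\<Sum>p\<in>P. h p) = (\<Sum>c\<in>S. \<Sum>k<3. h (c,k))" for h :: "vtx \<times> nat \<Rightarrow> complex"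
    unfolding P_def by (simp add: sum.cartesian_product)
  have FpP: "p \<in> P \<Longrightarrow> q \<in> P \<Longrightarrow> Fp p = Fp q \<longleftrightarrow> p = q" for p q
    using injP unfolding inj_on_def by auto
  have FpW: "p \<in> P \<Longrightarrow> Fp p \<in> W" for p unfolding Weq by simp
  have detc: "c \<in> S \<Longrightarrow> det3 (Ml c) = Dc" for c
    unfolding Ml_def Dc_def t_def F_def S_def using cell_facts(1)[OF fc] by blast
  have Mdiff: "c \<noteq> c' \<Longrightarrow> k < 3 \<Longrightarrow> k' < 3 \<Longrightarrow> M (Fm c k) (Fm c' k') = 0" for c c' k k'
  proof -
    assume h: "c \<noteq> c'" "k < 3" "k' < 3"
    then have "Fm c k \<noteq> Fm c' k'" using Fm_inj by blast
    then show ?thesis unfolding M_def shifted_block_def using LapV_mm_diff[OF h] by simp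
  qed
  have Mleq: "Ml c k k' = M (Fm c k) (Fm c k')" for c k k' unfolding Ml_def Mloc_def M_def ..
  have inv1: "x \<in> W \<Longrightarrow> y \<in> W \<Longrightarrow> (\<Sum>z\<in>W. M x z * Dinv z y) = (if x = y then 1 else 0)" for x y
    using inv unfolding inverse_on_def M_def W_def by blast
  have inv2: "x \<in> W \<Longrightarrow> y \<in> W \<Longrightarrow> (\<Sum>z\<in>W. Dinv x z * M z y) = (if x = y then 1 else 0)" for x y
    using inv unfolding inverse_on_def M_def W_def by blast

  have Dnz: "Dc \<noteq> 0"
  proof -
    define c0 where "c0 = ((0,0)::vtx)"
    have c0: "c0 \<in> S" unfolding S_def c0_def by (rule zero_offs)
    have "(\<Sum>k<3. Ml c0 i k * Dinv (Fm c0 k) (Fm c0 j)) = (if i = j then 1 else 0)" if ij: "i < 3" "j < 3" for i j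
    proof -
      have P1: "(c0,i) \<in> P" "(c0,j) \<in> P" unfolding P_def using c0 ij by auto
      have "(\<Sum>z\<in>W. M (Fm c0 i) z * Dinv z (Fm c0 j)) = (if i = j then 1 else 0)"
        using inv1[OF FpW[OF P1(1)] FpW[OF P1(2)]] FpP[OF P1(1) P1(2)] unfolding Fp_def by simp
      moreover have "(\<Sum>z\<in>W. M (Fm c0 i) z * Dinv z (Fm c0 j)) = (\<Sum>k<3. Ml c0 i k * Dinv (Fm c0 k) (Fm c0 j))"
      proof -
        have "(\<Sum>z\<in>W. M (Fm c0 i) z * Dinv z (Fm c0 j)) = (\<Sum>c\<in>S. \<Sum>k<3. M (Fm c0 i) (Fm c k) * Dinv (Fm c k) (Fm c0 j))"
          unfolding sumW sumP Fp_def by simp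
        also have "\<dots> = (\<Sum>k<3. M (Fm c0 i) (Fm c0 k) * Dinv (Fm c0 k) (Fm c0 j))"
          by (rule sum_single[OF finS c0]) (simp add: Mdiff ij)
        finally show ?thesis unfolding Mleq .
      qed
      ultimately show ?thesis by simp
    qed
    then have "det3 (Ml c0) \<noteq> 0" by (rule det3_inv_nz)
    then show ?thesis using detc[OF c0] by simp
  qed
  define Ei where "Ei p q = (if fst p = fst q then adj3 (Ml (fst p)) (snd p) (snd q) / Dc else 0)"
    for p q :: "vtx \<times> nat"
  have B1: "(\<Sum>s\<in>P. M (Fp r) (Fp s) * Ei s q) = (if r = q then 1 else 0)" if rq: "r \<in> P" "q \<in> P" for r q
  proof -
    obtain c2 j2 c' k' where r: "r = (c2,j2)" and q: "q = (c',k')" by (cases r, cases q)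
    have c2: "c2 \<in> S" "j2 < 3" and c': "c' \<in> S" "k' < 3" using rq unfolding r q P_def by auto
    have "(\<Sum>s\<in>P. M (Fp r) (Fp s) * Ei s q) = (\<Sum>c3\<in>S. \<Sum>j3<3. M (Fm c2 j2) (Fm c3 j3) * Ei (c3,j3) (c',k'))"
      unfolding sumP r q Fp_def by simp
    also have "\<dots> = (\<Sum>j3<3. M (Fm c2 j2) (Fm c' j3) * Ei (c',j3) (c',k'))"
      by (rule sum_single[OF finS c'(1)]) (simp add: Ei_def)
    also have "\<dots> = (\<Sum>j3<3. M (Fm c2 j2) (Fm c' j3) * adj3 (Ml c') j3 k') / Dc"
      unfolding Ei_def by (simp add: sum_divide_distrib)
    also have "\<dots> = (if r = q then 1 else 0)"
    proof (cases "c2 = c'")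
      case True
      have "(\<Sum>j3<3. M (Fm c2 j2) (Fm c' j3) * adj3 (Ml c') j3 k') = (if j2 = k' then det3 (Ml c') else 0)"
        unfolding True Mleq[symmetric] by (rule adj3_right[OF c2(2) c'(2)])
      then show ?thesis using detc[OF c'(1)] Dnz unfolding r q True by simp
    next
      case False
      then show ?thesis using Mdiff[OF False c2(2)] unfolding r q by simp
    qed
    finally show ?thesis .
  qed
  have B2: "Dinv (Fp p) (Fp q) = Ei p q" if pq: "p \<in> P" "q \<in> P" for p q
  proof -
    have "Ei p q = (\<Sum>s\<in>P. if p = s then Ei s q else 0)"
      using pq(1) finP by (simp add: sum.delta)
    also have "\<dots> = (\<Sum>s\<in>P. (if p = s then 1 else 0) * Ei s q)"
      by (intro sum.cong refl) simp
    also have "\<dots> = (\<Sum>s\<in>P. (\<Sum>r\<in>P. Dinv (Fp p) (Fp r) * M (Fp r) (Fp s)) * Ei s q)"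
    proof (intro sum.cong refl)
      fix s assume s: "s \<in> P"
      have "(\<Sum>r\<in>P. Dinv (Fp p) (Fp r) * M (Fp r) (Fp s)) = (\<Sum>z\<in>W. Dinv (Fp p) z * M z (Fp s))"
        unfolding sumW ..
      also have "\<dots> = (if Fp p = Fp s then 1 else 0)" by (rule inv2[OF FpW[OF pq(1)] FpW[OF s]])
      finally show "(if p = s then 1 else 0) * Ei s q = (\<Sum>r\<in>P. Dinv (Fp p) (Fp r) * M (Fp r) (Fp s)) * Ei s q"
        using FpP[OF pq(1) s] by simp
    qed
    also have "\<dots> = (\<Sum>s\<in>P. \<Sum>r\<in>P. Dinv (Fp p) (Fp r) * M (Fp r) (Fp s) * Ei s q)"
      by (simp only: sum_distrib_right)
    also have "\<dots> = (\<Sum>r\<in>P. \<Sum>s\<in>P. Dinv (Fp p) (Fp r) * M (Fp r) (Fp s) * Ei s q)"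
      by (rule sum.swap)
    also have "\<dots> = (\<Sum>r\<in>P. Dinv (Fp p) (Fp r) * (\<Sum>s\<in>P. M (Fp r) (Fp s) * Ei s q))"
      by (simp only: sum_distrib_left mult.assoc)
    also have "\<dots> = (\<Sum>r\<in>P. Dinv (Fp p) (Fp r) * (if r = q then 1 else 0))"
      by (intro sum.cong refl) (simp add: B1 pq(2))
    also have "\<dots> = (\<Sum>r\<in>P. if r = q then Dinv (Fp p) (Fp r) else 0)"
      by (intro sum.cong refl) simp
    also have "\<dots> = Dinv (Fp p) (Fp q)"
      using pq(2) finP by (simp add: sum.delta)
    finally show ?thesis by simp
  qed

  define Q where "Q x y c = (\<Sum>k<3. \<Sum>k'<3. L x (Fm c k) * (adj3 (Ml c) k k' / Dc) * L (Fm c k') y)"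
    for x y c
  have schurC: "schur (Suc n) \<omega> lam Dinv x y = M x y - (\<Sum>c\<in>S. Q x y c)" for x y
  proof -
    have "(\<Sum>u\<in>W. \<Sum>v\<in>W. L x u * Dinv u v * L v y) = (\<Sum>p\<in>P. \<Sum>q\<in>P. L x (Fp p) * Ei p q * L (Fp q) y)"
      unfolding sumW using B2 by (intro sum.cong refl) simp
    also have "\<dots> = (\<Sum>p\<in>P. \<Sum>k'<3. L x (Fp p) * (adj3 (Ml (fst p)) (snd p) k' / Dc) * L (Fm (fst p) k') y)"
    proof (intro sum.cong refl)
      fix p assume p: "p \<in> P"
      then have fp: "fst p \<in> S" unfolding P_def by auto
      have "(\<Sum>q\<in>P. L x (Fp p) * Ei p q * L (Fp q) y) = (\<Sum>c'\<in>S. \<Sum>k'<3. L x (Fp p) * Ei p (c',k') * L (Fm c' k') y)"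
        unfolding sumP Fp_def by simp
      also have "\<dots> = (\<Sum>k'<3. L x (Fp p) * Ei p (fst p,k') * L (Fm (fst p) k') y)"
        by (rule sum_single[OF finS fp]) (simp add: Ei_def)
      finally show "(\<Sum>q\<in>P. L x (Fp p) * Ei p q * L (Fp q) y) =
          (\<Sum>k'<3. L x (Fp p) * (adj3 (Ml (fst p)) (snd p) k' / Dc) * L (Fm (fst p) k') y)"
        unfolding Ei_def by simp
    qed
    also have "\<dots> = (\<Sum>c\<in>S. Q x y c)"
      unfolding sumP Q_def Fp_def by simp
    finally have "(\<Sum>u\<in>W. \<Sum>v\<in>W. L x u * Dinv u v * L v y) = (\<Sum>c\<in>S. Q x y c)" .
    then show ?thesis unfolding schur_def M_def[symmetric] L_def[symmetric] W_def[symmetric] by simp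
  qed
  define \<kappa> where "\<kappa> x = (if x \<in> sg_V0 (Suc n) then 1/2 else (1/4::complex))" for x
  have Lcm: "L (Fc c i) (Fm c k) = (if ladj i k then - \<kappa> (Fc c i) * \<omega> (Fc c i) (Fm c k) else 0)"
    if "c \<in> S" "i < 3" "k < 3" for c i k
  proof -
    obtain p q where pq: "Fc c i = (2*p,2*q)" using Fc_ev by blast
    have e: "(\<exists>i'<3. (2*p,2*q) = Fc c i' \<and> ladj i' k) \<longleftrightarrow> ladj i k"
      using Fc_inj[of c i] that(2) unfolding pq[symmetric] by blast
    show ?thesis using LapV_cm[of c n k \<omega> p q] that unfolding L_def S_def pq e \<kappa>_def by simp
  qed
  have Lmc: "L (Fm c k) (Fc c j) = (if ladj j k then - (1/4) * \<omega> (Fm c k) (Fc c j) else 0)"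
    if "c \<in> S" "j < 3" "k < 3" for c j k
  proof -
    obtain p q where pq: "Fc c j = (2*p,2*q)" using Fc_ev by blast
    have e: "(\<exists>i'<3. (2*p,2*q) = Fc c i' \<and> ladj i' k) \<longleftrightarrow> ladj j k"
      using Fc_inj[of c j] that(2) unfolding pq[symmetric] by blast
    show ?thesis using LapV_mc[of c n k \<omega> p q] that unfolding L_def S_def pq e by simp
  qed
  have Qval: "Q (Fc c i) (Fc c j) c = \<kappa> (Fc c i) / 4 *
      Rsum (adj3 (Ml c)) (\<lambda>k. \<omega> (Fc c i) (Fm c k)) (\<lambda>k. \<omega> (Fm c k) (Fc c j)) i j / Dc"
    if "c \<in> S" "i < 3" "j < 3" for c i j
    unfolding Q_def by (rule Qval_gen) (simp_all add: Lcm Lmc that)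
  have Qz1: "Q (2*p,2*q) y c = 0" if "c \<in> S" "\<not> (\<exists>i<3. (2*p,2*q) = Fc c i)" for p q y c
  proof -
    have "L (2*p,2*q) (Fm c k) = 0" if "k < 3" for k
      using LapV_cm[of c n k \<omega> p q] \<open>c \<in> S\<close> \<open>\<not> (\<exists>i<3. (2*p,2*q) = Fc c i)\<close> that unfolding L_def S_def by auto
    then show ?thesis unfolding Q_def by simp
  qed
  have Qz2: "Q x (2*p,2*q) c = 0" if "c \<in> S" "\<not> (\<exists>i<3. (2*p,2*q) = Fc c i)" for p q x c
  proof -
    have "L (Fm c k) (2*p,2*q) = 0" if "k < 3" for k
      using LapV_mc[of c n k \<omega> p q] \<open>c \<in> S\<close> \<open>\<not> (\<exists>i<3. (2*p,2*q) = Fc c i)\<close> that unfolding L_def S_def by auto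
    then show ?thesis unfolding Q_def by simp
  qed
  define A8 where "A8 = (16*(1-t)^2 - (32 + 2*(E+1/E))*(1-t) + 15 + 2*(E+1/E) + (E*F + 1/(E*F))/2)/8"
  define Psi where "Psi = t^2 - 1/16 + t/4 * (2/E + 1/(E^2*F)) + 1/16 * (1/E^2 + 2/(E*F))"
  define Psic where "Psic = t^2 - 1/16 + t/4 * (2*E + E^2*F) + 1/16 * (E^2 + 2*E*F)"
  note cf = cell_facts[OF fc, of _ lam, folded E_def F_def t_def Ml_def A8_def Psi_def Psic_def S_def]
  have Rdiag: "Rsum (adj3 (Ml c)) (\<lambda>k. \<omega> (Fc c i) (Fm c k)) (\<lambda>k. \<omega> (Fm c k) (Fc c i)) i i = A8"
    if "c \<in> S" "i < 3" for c i
    using k3[OF that(2)] cf(2-4)[OF that(1)] unfolding A8_def by auto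
  have Mcc: "M (2*p,2*q) (2*p',2*q') = (if (p,q) = (p',q') then 1 - complex_of_real lam else 0)" for p q p' q'
    unfolding M_def shifted_block_def LapV_cc by auto
  have A8e: "complex_of_real (A_fun \<alpha> \<beta> lam) = 8 * A8"
    unfolding A8_def A_E E_def F_def t_def by (simp add: field_simps)
  have De: "complex_of_real (D_fun \<beta> lam) = Dc"
    unfolding Dc_def D_E F_def t_def ..
  have PsiE: "Psi_fun \<alpha> \<beta> lam = Psi" unfolding Psi_def Psi_E E_def F_def t_def ..
  have PsicE: "cnj (Psi_fun \<alpha> \<beta> lam) = Psic" unfolding Psic_def cnj_Psi E_def F_def t_def by (simp add: algebra_simps)

  have diag: "schur (Suc n) \<omega> lam Dinv a a = t - A8 / (8 * Dc)" if a: "a \<in> sg_Vnest (Suc n)" for a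
  proof -
    obtain p q where pq: "(p,q) \<in> sg_V n" "a = (2*p,2*q)" using a unfolding Vnest_Suc by blast
    define C where "C = {c \<in> S. (p,q) \<in> up_tri c 1}"
    have CS: "C \<subseteq> S" unfolding C_def by auto
    have "(\<Sum>c\<in>S. Q a a c) = (\<Sum>c\<in>C. Q a a c)"
    proof (rule sum.mono_neutral_right[OF finS CS])
      show "\<forall>c\<in>S - C. Q a a c = 0"
      proof
        fix c assume "c \<in> S - C"
        then have "c \<in> S" "\<not> (\<exists>i<3. (2*p,2*q) = Fc c i)" unfolding C_def Fc_iff by auto
        then show "Q a a c = 0" unfolding pq(2) by (rule Qz1)
      qed
    qed
    also have "\<dots> = (\<Sum>c\<in>C. \<kappa> a / 4 * A8 / Dc)"
    proof (rule sum.cong[OF refl])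
      fix c assume c: "c \<in> C"
      then obtain i where i: "i < 3" "a = Fc c i" using pq(2) unfolding C_def Fc_iff[symmetric] by auto
      have cS: "c \<in> S" using c CS by auto
      show "Q a a c = \<kappa> a / 4 * A8 / Dc" using Qval[OF cS i(1) i(1)] Rdiag[OF cS i(1)] unfolding i(2) by simp
    qed
    also have "\<dots> = of_nat (card C) * (\<kappa> a / 4 * A8 / Dc)" by simp
    also have "card C = (if (p,q) \<in> sg_V0 n then 1 else 2)"
      using cnt_val[OF pq(1)] unfolding cnt_def C_def S_def .
    finally have sQ: "(\<Sum>c\<in>S. Q a a c) = of_nat (if (p,q) \<in> sg_V0 n then 1 else 2) * (\<kappa> a / 4 * A8 / Dc)" .
    have ka: "\<kappa> a = (if (p,q) \<in> sg_V0 n then 1/2 else 1/4)" unfolding \<kappa>_def pq(2) V0_Suc_ev ..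
    have Maa: "M a a = t" unfolding pq(2) Mcc t_def by simp
    show ?thesis unfolding schurC sQ Maa ka using Dnz by (cases "(p,q) \<in> sg_V0 n") (simp_all add: field_simps)
  qed

  have offd: "schur (Suc n) \<omega> lam Dinv (Fc c i) (Fc c j) = - (\<kappa> (Fc c i) / 4 *
      Rsum (adj3 (Ml c)) (\<lambda>k. \<omega> (Fc c i) (Fm c k)) (\<lambda>k. \<omega> (Fm c k) (Fc c j)) i j / Dc)"
    if that: "c \<in> S" "i < 3" "j < 3" "i \<noteq> j" for c i j
  proof -
    obtain p q where pq: "Fc c i = (2*p,2*q)" using Fc_ev by blast
    obtain p' q' where pq': "Fc c j = (2*p',2*q')" using Fc_ev by blast
    have ne: "(p,q) \<noteq> (p',q')" using Fc_inj[of c i j] that pq pq' by auto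
    have u: "(p,q) \<in> up_tri c 1" "(p',q') \<in> up_tri c 1"
      using pq pq' that(2,3) unfolding Fc_iff[symmetric] by metis+
    have "(\<Sum>c'\<in>S. Q (Fc c i) (Fc c j) c') = Q (Fc c i) (Fc c j) c"
    proof (rule sum_single[OF finS that(1)])
      fix c' assume c': "c' \<in> S" "c' \<noteq> c"
      show "Q (Fc c i) (Fc c j) c' = 0"
      proof (cases "(p,q) \<in> up_tri c' 1")
        case True
        then have "(p',q') \<notin> up_tri c' 1" using shared[OF ne u(1) u(2) True] c'(2) by auto
        then have "\<not> (\<exists>i<3. (2*p',2*q') = Fc c' i)" unfolding Fc_iff .
        then show ?thesis unfolding pq' by (rule Qz2[OF c'(1)])
      next
        case False
        then have "\<not> (\<exists>i<3. (2*p,2*q) = Fc c' i)" unfolding Fc_iff .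
        then show ?thesis unfolding pq by (rule Qz1[OF c'(1)])
      qed
    qed
    moreover have "M (Fc c i) (Fc c j) = 0" unfolding pq pq' Mcc using ne by (simp only: if_False)
    ultimately show ?thesis unfolding schurC using Qval[OF that(1-3)] by simp
  qed
  have gen: "schur (Suc n) \<omega> lam Dinv (Fc c i) (Fc c j) = - (\<kappa> (Fc c i) / 4 * (X * \<omega> (Fc c i) (midpt (Fc c i) (Fc c j)) * \<omega> (midpt (Fc c i) (Fc c j)) (Fc c j)) / Dc)"
    if "c \<in> S" "i < 3" "j < 3" "i \<noteq> j" "midpt (Fc c i) (Fc c j) = Fm c m"
       "Rsum (adj3 (Ml c)) (\<lambda>k. \<omega> (Fc c i) (Fm c k)) (\<lambda>k. \<omega> (Fm c k) (Fc c j)) i j = X * \<omega> (Fc c i) (Fm c m) * \<omega> (Fm c m) (Fc c j)"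
    for c i j m X
    using offd[OF that(1-4)] that(5,6) by simp
  have ccw: "schur (Suc n) \<omega> lam Dinv ai aj = - (\<kappa> ai / 4 * (Psi * \<omega> ai (midpt ai aj) * \<omega> (midpt ai aj) aj) / Dc)"
    if "c \<in> S" "ccw_in (pscale 2 c) 2 ai aj" for c ai aj
    using that(2) unfolding ccw_Fc
  proof (elim disjE conjE)
    assume "ai = Fc c 0" "aj = Fc c 1" then show ?thesis
      using gen[OF that(1), of 0 1 0 Psi] midpt_Fc cf(5)[OF that(1)] unfolding Psi_def by simp
  next
    assume "ai = Fc c 1" "aj = Fc c 2" then show ?thesis
      using gen[OF that(1), of 1 2 1 Psi] midpt_Fc cf(6)[OF that(1)] unfolding Psi_def by simp
  next
    assume "ai = Fc c 2" "aj = Fc c 0" then show ?thesis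
      using gen[OF that(1), of 2 0 2 Psi] midpt_Fc cf(7)[OF that(1)] unfolding Psi_def by simp
  qed
  have cw: "schur (Suc n) \<omega> lam Dinv ai aj = - (\<kappa> ai / 4 * (Psic * \<omega> ai (midpt ai aj) * \<omega> (midpt ai aj) aj) / Dc)"
    if "c \<in> S" "ccw_in (pscale 2 c) 2 aj ai" for c ai aj
    using that(2) unfolding ccw_Fc
  proof (elim disjE conjE)
    assume "aj = Fc c 0" "ai = Fc c 1" then show ?thesis
      using gen[OF that(1), of 1 0 0 Psic] midpt_Fc cf(8)[OF that(1)] unfolding Psic_def by simp
  next
    assume "aj = Fc c 1" "ai = Fc c 2" then show ?thesis
      using gen[OF that(1), of 2 1 1 Psic] midpt_Fc cf(9)[OF that(1)] unfolding Psic_def by simp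
  next
    assume "aj = Fc c 2" "ai = Fc c 0" then show ?thesis
      using gen[OF that(1), of 0 2 2 Psic] midpt_Fc cf(10)[OF that(1)] unfolding Psic_def by simp
  qed
  have cells: "c0 \<in> sg_cells_nest N \<Longrightarrow> \<exists>c\<in>S. c0 = pscale 2 c" for c0
    unfolding sg_cells_nest_def N S_def by auto
  have k1: "\<kappa> x = 1/4" if "x \<notin> sg_V0 N" for x using that unfolding \<kappa>_def N by simp
  have k2: "\<kappa> x = 1/2" if "x \<in> sg_V0 N" for x using that unfolding \<kappa>_def N by simp
  show ?thesis
  proof (intro conjI allI impI ballI)
    fix a assume "a \<in> sg_Vnest N"
    then have "schur N \<omega> lam Dinv a a = t - A8 / (8 * Dc)" using diag unfolding N by blast
    then show "schur N \<omega> lam Dinv a a = 1 - lam - A_fun \<alpha> \<beta> lam / (64 * D_fun \<beta> lam)"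
      unfolding t_def using A8e De Dnz by (simp add: field_simps)
  next
    fix ai aj c0 assume h: "ai \<in> sg_Vnest N" "aj \<in> sg_Vnest N" "ai \<noteq> aj" "c0 \<in> sg_cells_nest N"
      "ccw_in c0 2 ai aj" "ai \<notin> sg_V0 N"
    obtain c where c: "c \<in> S" "c0 = pscale 2 c" using cells[OF h(4)] by blast
    show "schur N \<omega> lam Dinv ai aj = - (Psi_fun \<alpha> \<beta> lam * \<omega> ai (midpt ai aj) * \<omega> (midpt ai aj) aj) / (16 * D_fun \<beta> lam)"
      using ccw[OF c(1) h(5)[unfolded c(2)]] k1[OF h(6)] unfolding N[symmetric] PsiE using Dnz unfolding De[symmetric] by (simp add: field_simps)
  next
    fix ai aj c0 assume h: "ai \<in> sg_Vnest N" "aj \<in> sg_Vnest N" "ai \<noteq> aj" "c0 \<in> sg_cells_nest N"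
      "ccw_in c0 2 ai aj" "ai \<in> sg_V0 N"
    obtain c where c: "c \<in> S" "c0 = pscale 2 c" using cells[OF h(4)] by blast
    show "schur N \<omega> lam Dinv ai aj = - (Psi_fun \<alpha> \<beta> lam * \<omega> ai (midpt ai aj) * \<omega> (midpt ai aj) aj) / (8 * D_fun \<beta> lam)"
      using ccw[OF c(1) h(5)[unfolded c(2)]] k2[OF h(6)] unfolding N[symmetric] PsiE using Dnz unfolding De[symmetric] by (simp add: field_simps)
  next
    fix ai aj c0 assume h: "ai \<in> sg_Vnest N" "aj \<in> sg_Vnest N" "ai \<noteq> aj" "c0 \<in> sg_cells_nest N"
      "ccw_in c0 2 aj ai" "ai \<notin> sg_V0 N"
    obtain c where c: "c \<in> S" "c0 = pscale 2 c" using cells[OF h(4)] by blast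
    show "schur N \<omega> lam Dinv ai aj = - (cnj (Psi_fun \<alpha> \<beta> lam) * \<omega> ai (midpt ai aj) * \<omega> (midpt ai aj) aj) / (16 * D_fun \<beta> lam)"
      using cw[OF c(1) h(5)[unfolded c(2)]] k1[OF h(6)] unfolding N[symmetric] PsicE using Dnz unfolding De[symmetric] by (simp add: field_simps)
  next
    fix ai aj c0 assume h: "ai \<in> sg_Vnest N" "aj \<in> sg_Vnest N" "ai \<noteq> aj" "c0 \<in> sg_cells_nest N"
      "ccw_in c0 2 aj ai" "ai \<in> sg_V0 N"
    obtain c where c: "c \<in> S" "c0 = pscale 2 c" using cells[OF h(4)] by blast
    show "schur N \<omega> lam Dinv ai aj = - (cnj (Psi_fun \<alpha> \<beta> lam) * \<omega> ai (midpt ai aj) * \<omega> (midpt ai aj) aj) / (8 * D_fun \<beta> lam)"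
      using cw[OF c(1) h(5)[unfolded c(2)]] k2[OF h(6)] unfolding N[symmetric] PsicE using Dnz unfolding De[symmetric] by (simp add: field_simps)
  qed
qed

end
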